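(* Assume $X$ is bounded and $F$ is monotone: $\langle F(x_1)-F(x_2),x_1-x_2\rangle\ge0$ for all $x_1,x_2\in X$. Let $\{x_t\}$ be generated by the SBOE method with $p_i=\frac1b$ for all $i$, and let $\{\theta_t\}$ be nonnegative numbers such that for all $t=1,\dots,k$, $$\theta_{t+1}\gamma_{t+1}\lambda_{t+1}=\theta_t\gamma_tb,\quad\theta_{t-1}\gamma_{t-1}b\ge\theta_t\gamma_t(b-1),\quad\theta_{t-1}\ge16\bar L^2\gamma_t^2\lambda_t^2\theta_t,\quad\theta_t\le\theta_{t-1},$$ and $4L^2\gamma_k^2\le1$. Let $S=\sum_{t=1}^{k-1}[\theta_t\gamma_tb-\theta_{t+1}\gamma_{t+1}(b-1)]+\theta_k\gamma_kb$ (assumed positive) and $$\bar x_{k+1}=\frac{\sum_{t=1}^{k-1}[\theta_t\gamma_tb-\theta_{t+1}\gamma_{t+1}(b-1)]x_{t+1}+\theta_k\gamma_kbx_{k+1}}{S}.$$ Then $$\mathbb{E}[\mathrm{gap}(\bar x_{k+1})]\le\frac{\theta_1}{S}\max_{x\in X}\big[5(b+1)V(x_1,x)+\gamma_1(b-1)\langle F(x_1),x_1-x\rangle\big].$$ In particular, if $\gamma_t=\frac1{4\bar Lb}$, $\lambda_t=b$ and $\theta_t=1$ for all $t$, then $$\mathbb{E}[\mathrm{gap}(\bar x_{k+1})]\le\frac{4\bar Lb}{k-1+b}\max_{x\in X}\Big[5(b+1)V(x_1,x)+\frac{b-1}{4\bar Lb}\langle F(x_1),x_1-x\rangle\Big]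.$$
   Context: Let $X=X_1\times\cdots\times X_b\subseteq\mathbb{R}^n$, where each $X_i\subseteq\mathbb{R}^{n_i}$ is nonempty closed convex and $n_1+\dots+n_b=n$; write $x=(x^{(1)},\dots,x^{(b)})$. Each $\mathbb{R}^{n_i}$ carries the Euclidean norm $\|\cdot\|_i$, and $\|x\|^2=\sum_i\|x^{(i)}\|_i^2$ is the Euclidean norm on $\mathbb{R}^n$. For $F:X\to\mathbb{R}^n$ let $F_i(x)$ be its $i$-th block; assume $\|F(x_1)-F(x_2)\|\le L\|x_1-x_2\|$ and $\|F_i(x_1)-F_i(x_2)\|_i\le\bar L\|x_1-x_2\|$ for all $i$ and $x_1,x_2\in X$. Take $\omega_i(u)=\frac12\|u\|_i^2$, so $V_i(u,v)=\frac12\|u-v\|_i^2$ and $V(x,y)=\sum_iV_i(x^{(i)},y^{(i)})=\frac12\|x-y\|^2$. SBOE method: given $x_0=x_1\in X$, nonnegative $\{\gamma_t\},\{\lambda_t\}$ and probabilities $p_1,\dots,p_b$; for $t=1,\dots,k$ draw $i_t$ with $\mathbb{P}(i_t=i)=p_i$ independently of the past, set $x_{t+1}^{(i_t)}=\operatorname{argmin}_{u\in X_{i_t}}\gamma_t\langle F_{i_t}(x_t)+\lambda_t(F_{i_t}(x_t)-F_{i_t}(x_{t-1})),u\rangle+V_{i_t}(x_t^{(i_t)},u)$ and $x_{t+1}^{(i)}=x_t^{(i)}$ for $i\ne i_t$. The weak gap is $\mathrm{gap}(\bar x)=\max_{x\in X}\langle F(x),\bar x-x\rangle$; expectation is over $i_1,\dots,i_k$.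 *)

theory Defs
  imports "HOL-Analysis.Analysis"
begin

text \<open>R^n is modelled as real^'n; a block structure is a map blk from coordinates to
  block indices {0..<b}.\<close>

definition blk_part :: "('n::finite \<Rightarrow> nat) \<Rightarrow> nat \<Rightarrow> real^'n \<Rightarrow> real^'n" where
  "blk_part blk i x = (\<chi> j. if blk j = i then x $ j else 0)"

text \<open>Subspace of R^n corresponding to R^{n_i}.\<close>
definition blk_space :: "('n::finite \<Rightarrow> nat) \<Rightarrow> nat \<Rightarrow> (real^'n) set" where
  "blk_space blk i = {y. \<forall>j. blk j \<noteq> i \<longrightarrow> y $ j = 0}"

definition prod_set :: "('n::finite \<Rightarrow> nat) \<Rightarrow> nat \<Rightarrow> (nat \<Rightarrow> (real^'n) set) \<Rightarrow> (real^'n) set" where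
  "prod_set blk b Xi = {x. \<forall>i<b. blk_part blk i x \<in> Xi i}"

text \<open>Bregman distance for omega = 1/2 norm^2.\<close>
definition Vd :: "real^'n::finite \<Rightarrow> real^'n \<Rightarrow> real" where
  "Vd x y = (1/2) * (norm (x - y))\<^sup>2"

definition gap :: "(real^'n::finite) set \<Rightarrow> (real^'n \<Rightarrow> real^'n) \<Rightarrow> real^'n \<Rightarrow> real" where
  "gap X F y = (SUP x\<in>X. inner (F x) (y - x))"

definition sboe_step ::
  "('n::finite \<Rightarrow> nat) \<Rightarrow> (nat \<Rightarrow> (real^'n) set) \<Rightarrow> (real^'n \<Rightarrow> real^'n)
    \<Rightarrow> real \<Rightarrow> real \<Rightarrow> nat \<Rightarrow> real^'n \<Rightarrow> real^'n \<Rightarrow> real^'n \<Rightarrow> bool" where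
  "sboe_step blk Xi F g lam i xp x x' \<longleftrightarrow>
     (\<forall>i'. i' \<noteq> i \<longrightarrow> blk_part blk i' x' = blk_part blk i' x) \<and>
     (let d = blk_part blk i (F x + lam *\<^sub>R (F x - F xp));
          phi = (\<lambda>u. g * inner d u + Vd (blk_part blk i x) u)
      in blk_part blk i x' \<in> Xi i \<and> (\<forall>v\<in>Xi i. phi (blk_part blk i x') \<le> phi v))"

text \<open>The index sequences (i_1,...,i_k) with i_t in {0..<b}; uniform distribution p_i = 1/b.\<close>
definition idx_seqs :: "nat \<Rightarrow> nat \<Rightarrow> (nat \<Rightarrow> nat) set" where
  "idx_seqs b k = PiE {1..k} (\<lambda>_. {..<b})"

definition expect_unif :: "nat \<Rightarrow> nat \<Rightarrow> ((nat \<Rightarrow> nat) \<Rightarrow> real) \<Rightarrow> real" where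
  "expect_unif b k f = (\<Sum>\<omega>\<in>idx_seqs b k. f \<omega>) / (real b ^ k)"

definition S_w :: "nat \<Rightarrow> nat \<Rightarrow> (nat \<Rightarrow> real) \<Rightarrow> (nat \<Rightarrow> real) \<Rightarrow> real" where
  "S_w b k th gam = (\<Sum>t=1..k-1. th t * gam t * real b - th (t + 1) * gam (t + 1) * (real b - 1))
                    + th k * gam k * real b"

definition xbar_w :: "nat \<Rightarrow> nat \<Rightarrow> (nat \<Rightarrow> real) \<Rightarrow> (nat \<Rightarrow> real) \<Rightarrow> (nat \<Rightarrow> real^'n::finite) \<Rightarrow> real^'n" where
  "xbar_w b k th gam xs = (1 / S_w b k th gam) *\<^sub>R
      ((\<Sum>t=1..k-1. (th t * gam t * real b - th (t + 1) * gam (t + 1) * (real b - 1)) *\<^sub>R xs (t + 1))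
       + (th k * gam k * real b) *\<^sub>R xs (k + 1))"

end

theory Submission
  imports Defs
begin


lemma bp_add: "blk_part blk i (a + c) = blk_part blk i a + blk_part blk i c"
  by (simp add: blk_part_def vec_eq_iff)
lemma bp_diff: "blk_part blk i (a - c) = blk_part blk i a - blk_part blk i c"
  by (simp add: blk_part_def vec_eq_iff)
lemma bp_scale: "blk_part blk i (r *\<^sub>R a) = r *\<^sub>R blk_part blk i a"
  by (simp add: blk_part_def vec_eq_iff)
lemma bp_idem: "blk_part blk i (blk_part blk i a) = blk_part blk i a"
  by (simp add: blk_part_def vec_eq_iff)
lemma bp_orth: "i \<noteq> j \<Longrightarrow> blk_part blk i (blk_part blk j a) = 0"
  by (simp add: blk_part_def vec_eq_iff)
lemma bp_inner1: "inner (blk_part blk i a) c = inner (blk_part blk i a) (blk_part blk i c)"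
  by (auto simp add: blk_part_def inner_vec_def intro!: sum.cong)
lemma bp_inner2: "inner a (blk_part blk i c) = inner (blk_part blk i a) (blk_part blk i c)"
  by (auto simp add: blk_part_def inner_vec_def intro!: sum.cong)
lemma bp_sum: "\<forall>j. blk j < b \<Longrightarrow> (\<Sum>i<b. blk_part blk i w) = w"
proof -
  assume h: "\<forall>j. blk j < b"
  show ?thesis
  proof (simp add: vec_eq_iff, intro allI)
    fix j
    have "(\<Sum>i<b. blk_part blk i w $ j) = (\<Sum>i<b. if i = blk j then w $ j else 0)"
      by (rule sum.cong) (auto simp: blk_part_def)
    also have "\<dots> = w $ j" using h by simp
    finally show "(\<Sum>i<b. blk_part blk i w $ j) = w $ j" .
  qed
qed
lemma bp_inner_sum: "\<forall>j. blk j < b \<Longrightarrow> (\<Sum>i<b. inner (blk_part blk i a) c) = inner a c"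
  by (simp add: inner_sum_left[symmetric] bp_sum)
lemma bp_inner_sum2: "\<forall>j. blk j < b \<Longrightarrow> (\<Sum>i<b. inner c (blk_part blk i a)) = inner c a"
  by (simp add: inner_sum_right[symmetric] bp_sum)
lemma bp_norm2: "(norm (blk_part blk i a))\<^sup>2 = inner (blk_part blk i a) a"
  by (metis bp_inner1 power2_norm_eq_inner)
lemma bp_norm_sum: "\<forall>j. blk j < b \<Longrightarrow> (\<Sum>i<b. (norm (blk_part blk i a))\<^sup>2) = (norm a)\<^sup>2"
proof -
  assume h: "\<forall>j. blk j < b"
  have "(\<Sum>i<b. (norm (blk_part blk i a))\<^sup>2) = (\<Sum>i<b. inner (blk_part blk i a) a)"
    by (simp only: bp_norm2)
  also have "\<dots> = inner a a" using bp_inner_sum[OF h] .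
  finally show ?thesis by (simp add: power2_norm_eq_inner)
qed
lemma bp_norm_le: "norm (blk_part blk i a) \<le> norm a"
proof -
  have "(norm (blk_part blk i a))\<^sup>2 \<le> norm (blk_part blk i a) * norm a"
    using bp_norm2 norm_cauchy_schwarz by metis
  then show ?thesis
    by (smt (verit) mult_left_le_one_le norm_ge_zero power2_eq_square mult_le_cancel_left)
qed
lemma step_struct:
  assumes "sboe_step blk Xi F g lam i xp x x'"
  shows "x' = x + blk_part blk i (x' - x)"
proof -
  have h: "\<forall>i'. i' \<noteq> i \<longrightarrow> blk_part blk i' x' = blk_part blk i' x"
    using assms unfolding sboe_step_def by blast
  show ?thesis
  proof (simp add: vec_eq_iff, intro allI)
    fix j
    show "x' $ j = x $ j + blk_part blk i (x' - x) $ j"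
    proof (cases "blk j = i")
      case True then show ?thesis by (simp add: blk_part_def)
    next
      case False
      then have "blk_part blk (blk j) x' $ j = blk_part blk (blk j) x $ j" using h by metis
      then show ?thesis using False by (simp add: blk_part_def)
    qed
  qed
qed



lemma small_nonneg:
  fixes p q :: real
  assumes "q \<ge> 0" "\<forall>s. 0 < s \<and> s \<le> 1 \<longrightarrow> 0 \<le> p + s * q"
  shows "0 \<le> p"
proof (rule ccontr)
  assume "\<not> 0 \<le> p"
  hence p: "p < 0" by simp
  show False
  proof (cases "q = 0")
    case True then show False using assms(2)[rule_format, of 1] p by simp
  next
    case False
    hence qp: "q > 0" using assms(1) by simp
    define s where "s = min 1 (-p / (2*q))"
    have s0: "0 < s" using p qp by (simp add: s_def field_simps)
    have s1: "s \<le> 1" by (simp add: s_def)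
    have "s * q \<le> (-p/(2*q)) * q" using qp by (intro mult_right_mono) (auto simp: s_def)
    also have "\<dots> = -p/2" using qp by (simp add: field_simps)
    finally have "p + s * q < 0" using p by simp
    then show False using assms(2) s0 s1 by fastforce
  qed
qed

lemma aux_real:
  fixes g dy nn s dv aa mm :: real
  shows "g * dy + nn / 2 \<le> g * (dy + s * dv) + (nn - 2 * s * aa + s ^ 2 * mm) / 2 \<Longrightarrow> 0 \<le> s * ((g * dv - aa) + s * (mm / 2))"
proof -
  assume h: "g * dy + nn / 2 \<le> g * (dy + s * dv) + (nn - 2 * s * aa + s ^ 2 * mm) / 2"
  have e: "g * (dy + s * dv) + (nn - 2 * s * aa + s ^ 2 * mm) / 2 - (g * dy + nn / 2) = s * ((g * dv - aa) + s * (mm / 2))"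
    by (simp add: algebra_simps power2_eq_square add_divide_distrib diff_divide_distrib)
  show ?thesis using h e by linarith
qed

lemma norm_sq_diff_expand:
  fixes a c :: "real^'n"
  shows "(norm (a - c))\<^sup>2 = (norm a)\<^sup>2 - 2 * inner a c + (norm c)\<^sup>2"
  by (simp add: power2_norm_eq_inner inner_diff_left inner_diff_right inner_commute)

lemma three_point:
  fixes a d y v :: "real^'n::finite"
  assumes C: "convex C" and y: "y \<in> C" and v: "v \<in> C"
    and opt: "\<forall>w\<in>C. g * inner d y + Vd a y \<le> g * inner d w + Vd a w"
  shows "g * inner d (y - v) \<le> Vd a v - Vd y v - Vd a y"
proof -
  define p where "p = g * inner d (v - y) - inner (a - y) (v - y)"
  define q where "q = (norm (v - y))\<^sup>2 / 2"
  have "0 \<le> p"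
  proof (rule small_nonneg[of q])
    show "0 \<le> q" by (simp add: q_def)
    show "\<forall>s. 0 < s \<and> s \<le> 1 \<longrightarrow> 0 \<le> p + s * q"
    proof (intro allI impI)
      fix s :: real assume s: "0 < s \<and> s \<le> 1"
      define w where "w = y + s *\<^sub>R (v - y)"
      have "w = (1 - s) *\<^sub>R y + s *\<^sub>R v" by (simp add: w_def algebra_simps)
      hence wC: "w \<in> C" using C y v s by (simp add: convex_def)
      have "g * inner d y + Vd a y \<le> g * inner d w + Vd a w" using opt wC by blast
      moreover have "a - w = (a - y) - s *\<^sub>R (v - y)" by (simp add: w_def algebra_simps)
      ultimately have "g * inner d y + (norm (a - y))\<^sup>2/2 \<le> g * inner d w + (norm ((a - y) - s *\<^sub>R (v - y)))\<^sup>2/2"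
        by (simp add: Vd_def)
      also have "(norm ((a - y) - s *\<^sub>R (v - y)))\<^sup>2 = (norm (a - y))\<^sup>2 - 2 * s * inner (a - y) (v - y) + s^2 * (norm (v - y))\<^sup>2"
        by (simp add: norm_sq_diff_expand power_mult_distrib)
      also have "inner d w = inner d y + s * inner d (v - y)" by (simp add: w_def inner_add_right)
      finally have "0 \<le> s * ((g * inner d (v - y) - inner (a - y) (v - y)) + s * ((norm (v - y))\<^sup>2 / 2))"
        by (rule aux_real)
      hence "0 \<le> s * (p + s * q)" by (simp add: p_def q_def)
      then show "0 \<le> p + s * q" using s by (simp add: zero_le_mult_iff)
    qed
  qed
  have "Vd a v - Vd y v - Vd a y = - inner (a - y) (v - y)"
  proof -
    have "a - v = (a - y) - (v - y)" by simp
    hence "(norm (a - v))\<^sup>2 = (norm (a - y))\<^sup>2 - 2 * inner (a - y) (v - y) + (norm (v - y))\<^sup>2"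
      by (metis norm_sq_diff_expand)
    moreover have "norm (y - v) = norm (v - y)" by (rule norm_minus_commute)
    ultimately show ?thesis by (simp add: Vd_def field_simps)
  qed
  moreover have "inner d (y - v) = - inner d (v - y)" by (simp add: inner_diff_right)
  ultimately show ?thesis using \<open>0 \<le> p\<close> by (simp add: p_def)
qed



lemma step_block_opt:
  assumes "sboe_step blk Xi F g lam i xp x x'"
  shows "blk_part blk i x' \<in> Xi i \<and>
    (\<forall>v\<in>Xi i. g * inner (blk_part blk i (F x + lam *\<^sub>R (F x - F xp))) (blk_part blk i x')
          + Vd (blk_part blk i x) (blk_part blk i x')
       \<le> g * inner (blk_part blk i (F x + lam *\<^sub>R (F x - F xp))) v + Vd (blk_part blk i x) v)"
  using assms unfolding sboe_step_def Let_def by blast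

lemma Vd_sym: "Vd a c = Vd c a"
  by (simp add: Vd_def norm_minus_commute)

lemma Vd_self: "Vd a a = 0" by (simp add: Vd_def)

lemma step_unique:
  assumes C: "convex (Xi i)"
    and s1: "sboe_step blk Xi F g lam i xp x x1" and s2: "sboe_step blk Xi F g lam i xp x x2"
  shows "x1 = x2"
proof -
  define d where "d = blk_part blk i (F x + lam *\<^sub>R (F x - F xp))"
  define a where "a = blk_part blk i x"
  define y1 where "y1 = blk_part blk i x1"
  define y2 where "y2 = blk_part blk i x2"
  have o1: "y1 \<in> Xi i" "\<forall>v\<in>Xi i. g * inner d y1 + Vd a y1 \<le> g * inner d v + Vd a v"
    using step_block_opt[OF s1] unfolding d_def a_def y1_def by auto
  have o2: "y2 \<in> Xi i" "\<forall>v\<in>Xi i. g * inner d y2 + Vd a y2 \<le> g * inner d v + Vd a v"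
    using step_block_opt[OF s2] unfolding d_def a_def y2_def by auto
  have t1: "g * inner d (y1 - y2) \<le> Vd a y2 - Vd y1 y2 - Vd a y1"
    by (rule three_point[OF C o1(1) o2(1) o1(2)])
  have t2: "g * inner d (y2 - y1) \<le> Vd a y1 - Vd y2 y1 - Vd a y2"
    by (rule three_point[OF C o2(1) o1(1) o2(2)])
  have "inner d (y2 - y1) = - inner d (y1 - y2)" by (simp add: inner_diff_right)
  hence "Vd y1 y2 \<le> 0" using t1 t2 Vd_sym[of y1 y2] by simp
  hence "norm (y1 - y2) = 0" by (simp add: Vd_def)
  hence "y1 = y2" by simp
  have "x1 = x + blk_part blk i (x1 - x)" by (rule step_struct[OF s1])
  also have "\<dots> = x + blk_part blk i (x2 - x)" using \<open>y1 = y2\<close> by (simp add: bp_diff y1_def y2_def)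
  also have "\<dots> = x2" by (rule step_struct[OF s2, symmetric])
  finally show ?thesis .
qed

lemma Vd_bp_sum: "\<forall>j. blk j < b \<Longrightarrow> (\<Sum>i<b. Vd (blk_part blk i a) (blk_part blk i c)) = Vd a c"
  by (simp add: Vd_def bp_diff[symmetric] sum_divide_distrib[symmetric] bp_norm_sum)

lemma TP_full:
  fixes g x h u :: "real^'n::finite"
  assumes blk: "\<forall>j. blk j < b" and C: "\<forall>i<b. convex (Xi i)"
    and opt: "\<forall>i<b. blk_part blk i h \<in> Xi i \<and> (\<forall>v\<in>Xi i.
        gm * inner (blk_part blk i g) (blk_part blk i h) + Vd (blk_part blk i x) (blk_part blk i h)
       \<le> gm * inner (blk_part blk i g) v + Vd (blk_part blk i x) v)"
    and u: "u \<in> prod_set blk b Xi"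
  shows "gm * inner g (h - u) \<le> Vd x u - Vd h u - Vd x h"
proof -
  have each: "gm * inner (blk_part blk i g) (blk_part blk i h - blk_part blk i u)
     \<le> Vd (blk_part blk i x) (blk_part blk i u) - Vd (blk_part blk i h) (blk_part blk i u)
        - Vd (blk_part blk i x) (blk_part blk i h)" if i: "i < b" for i
  proof (rule three_point)
    show "convex (Xi i)" using C i by blast
    show "blk_part blk i h \<in> Xi i" using opt i by blast
    show "blk_part blk i u \<in> Xi i" using u i by (simp add: prod_set_def)
    show "\<forall>w\<in>Xi i. gm * inner (blk_part blk i g) (blk_part blk i h) + Vd (blk_part blk i x) (blk_part blk i h)
       \<le> gm * inner (blk_part blk i g) w + Vd (blk_part blk i x) w" using opt i by blast
  qed
  have "gm * inner g (h - u) = (\<Sum>i<b. gm * inner (blk_part blk i g) (blk_part blk i h - blk_part blk i u))"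
    by (simp add: sum_distrib_left[symmetric] bp_diff[symmetric] bp_inner1[symmetric] bp_inner_sum[OF blk])
  also have "\<dots> \<le> (\<Sum>i<b. Vd (blk_part blk i x) (blk_part blk i u) - Vd (blk_part blk i h) (blk_part blk i u)
        - Vd (blk_part blk i x) (blk_part blk i h))"
    by (rule sum_mono) (use each in auto)
  also have "\<dots> = Vd x u - Vd h u - Vd x h"
    by (simp add: sum_subtractf Vd_bp_sum[OF blk])
  finally show ?thesis .
qed



lemma idx_upd: "w \<in> idx_seqs b k \<Longrightarrow> t \<in> {1..k} \<Longrightarrow> j < b \<Longrightarrow> w(t := j) \<in> idx_seqs b k"
  unfolding idx_seqs_def using PiE_fun_upd[of j "\<lambda>_. {..<b}" t w "{1..k}"]
  by (simp add: insert_absorb)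

lemma idx_range: "w \<in> idx_seqs b k \<Longrightarrow> t \<in> {1..k} \<Longrightarrow> w t < b"
  unfolding idx_seqs_def by (auto simp: PiE_def Pi_def)

lemma finite_idx: "finite (idx_seqs b k)"
  unfolding idx_seqs_def by (rule finite_PiE) auto

lemma card_idx: "card (idx_seqs b k) = b ^ k"
  unfolding idx_seqs_def by (simp add: card_PiE)

lemma avg_split:
  fixes G :: "(nat \<Rightarrow> nat) \<Rightarrow> real"
  assumes t: "t \<in> {1..k}"
  shows "(\<Sum>w\<in>idx_seqs b k. G w) = (\<Sum>i<b. \<Sum>g\<in>PiE ({1..k} - {t}) (\<lambda>_. {..<b}). G (g(t := i)))"
proof -
  let ?S = "{1..k} - {t}" and ?T = "\<lambda>_::nat. {..<b}"
  have eq: "idx_seqs b k = PiE (insert t ?S) ?T" using t by (simp add: idx_seqs_def insert_absorb)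
  have inj: "inj_on (\<lambda>(y, g). g(t := y)) (?T t \<times> PiE ?S ?T)" by (rule inj_combinator) simp
  have "(\<Sum>w\<in>idx_seqs b k. G w) = (\<Sum>w\<in>(\<lambda>(y, g). g(t := y)) ` (?T t \<times> PiE ?S ?T). G w)"
    unfolding eq by (simp only: PiE_insert_eq)
  also have "\<dots> = (\<Sum>p\<in>?T t \<times> PiE ?S ?T. G ((\<lambda>(y, g). g(t := y)) p))"
    by (rule sum.reindex[OF inj, unfolded comp_def])
  also have "\<dots> = (\<Sum>i<b. \<Sum>g\<in>PiE ?S ?T. G (g(t := i)))"
    by (simp add: sum.cartesian_product split_beta)
  finally show ?thesis .
qed

lemma avg_lemma:
  fixes G :: "(nat \<Rightarrow> nat) \<Rightarrow> real"
  assumes t: "t \<in> {1..k}"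
  shows "(\<Sum>w\<in>idx_seqs b k. \<Sum>j<b. G (w(t := j))) = real b * (\<Sum>w\<in>idx_seqs b k. G w)"
proof -
  let ?P = "PiE ({1..k} - {t}) (\<lambda>_::nat. {..<b})"
  have "(\<Sum>w\<in>idx_seqs b k. \<Sum>j<b. G (w(t := j))) = (\<Sum>i<b. \<Sum>g\<in>?P. \<Sum>j<b. G (g(t := j)))"
    using avg_split[OF t, of "\<lambda>w. \<Sum>j<b. G (w(t := j))"] by simp
  also have "\<dots> = real b * (\<Sum>g\<in>?P. \<Sum>j<b. G (g(t := j)))" by simp
  also have "(\<Sum>g\<in>?P. \<Sum>j<b. G (g(t := j))) = (\<Sum>j<b. \<Sum>g\<in>?P. G (g(t := j)))"
    by (rule sum.swap)
  also have "\<dots> = (\<Sum>w\<in>idx_seqs b k. G w)" using avg_split[OF t, of G] by simp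
  finally show ?thesis .
qed

lemma zero_mean:
  fixes \<phi> :: "(nat \<Rightarrow> nat) \<Rightarrow> nat \<Rightarrow> real"
  assumes t: "t \<in> {1..k}"
    and inv: "\<forall>w\<in>idx_seqs b k. \<forall>j<b. \<forall>i<b. \<phi> (w(t := j)) i = \<phi> w i"
  shows "(\<Sum>w\<in>idx_seqs b k. real b * \<phi> w (w t) - (\<Sum>i<b. \<phi> w i)) = 0"
proof -
  have "real b * (\<Sum>w\<in>idx_seqs b k. \<phi> w (w t)) = (\<Sum>w\<in>idx_seqs b k. \<Sum>j<b. \<phi> (w(t := j)) j)"
    using avg_lemma[OF t, of "\<lambda>w. \<phi> w (w t)"] by simp
  also have "\<dots> = (\<Sum>w\<in>idx_seqs b k. \<Sum>j<b. \<phi> w j)"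
    by (rule sum.cong[OF refl], rule sum.cong[OF refl]) (use inv in auto)
  finally show ?thesis by (simp add: sum_subtractf sum_distrib_left)
qed



lemma tele_gen: "(\<Sum>t=1..n. f t - f (t+1)) = f 1 - f (n+1)" for f :: "nat \<Rightarrow> real"
  by (induction n) auto

lemma tele2: "(\<Sum>t=1..n. e t - e (t-1)) = e n - e 0" for e :: "nat \<Rightarrow> real"
  by (induction n) auto

lemma tele_mono:
  fixes th V :: "nat \<Rightarrow> real"
  assumes "n \<ge> 1" "\<forall>t\<in>{1..n}. th t \<le> th (t-1)" "\<forall>t. V t \<ge> 0"
  shows "(\<Sum>t=1..n. th t * (V t - V (t+1))) \<le> th 1 * V 1 - th n * V (n+1)"
  using assms
proof (induction n)
  case 0 then show ?case by simp
next
  case (Suc n)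
  show ?case
  proof (cases "n = 0")
    case True then show ?thesis by (simp add: algebra_simps)
  next
    case False
    have ih: "(\<Sum>t=1..n. th t * (V t - V (t+1))) \<le> th 1 * V 1 - th n * V (n+1)"
      using Suc False by auto
    have "th (Suc n) \<le> th n" using Suc.prems(2) by (metis atLeastAtMost_iff diff_Suc_1 le_add1 order_refl plus_1_eq_Suc Suc_le_mono \<open>n \<noteq> 0\<close> not_one_le_zero  le_SucI le_refl Suc_leI zero_less_iff_neq_zero )
    hence "th (Suc n) * V (n+1) \<le> th n * V (n+1)" using Suc.prems(3) by (simp add: mult_right_mono)
    then show ?thesis using ih by (simp add: algebra_simps)
  qed
qed

lemma shiftA: "n \<ge> 1 \<Longrightarrow> (\<Sum>t=1..n-1. a t - c (t+1)) + a n = c 1 + (\<Sum>t=1..n. a t - c t)"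
  for a c :: "nat \<Rightarrow> real"
proof (induction n)
  case 0 then show ?case by simp
next
  case (Suc n)
  show ?case
  proof (cases "n = 0")
    case True then show ?thesis by simp
  next
    case False
    then have "(\<Sum>t=1..n-1. a t - c (t+1)) + a n = c 1 + (\<Sum>t=1..n. a t - c t)" using Suc by auto
    moreover have "(\<Sum>t=1..Suc n - 1. a t - c (t+1)) = (\<Sum>t=1..n-1. a t - c (t+1)) + (a n - c (n+1))"
      using False by (cases n) auto
    ultimately show ?thesis by simp
  qed
qed

lemma shiftY: "Y 0 = 0 \<Longrightarrow> (\<Sum>t=1..n. Y (t-1)) + Y n = (\<Sum>t=1..n. Y t)" for Y :: "nat \<Rightarrow> real"
  by (induction n) auto



lemma Vd_add: "Vd (a + p) u = Vd a u + inner p (a - u) + (norm p)\<^sup>2 / 2"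
proof -
  have ex: "(norm (c + p))\<^sup>2 = (norm c)\<^sup>2 + 2 * inner p c + (norm p)\<^sup>2" for c :: "real^'a"
    by (simp add: power2_norm_eq_inner inner_add_left inner_add_right inner_commute)
  have eqv: "a + p - u = (a - u) + p" by simp
  have "(norm (a + p - u))\<^sup>2 = (norm (a - u))\<^sup>2 + 2 * inner p (a - u) + (norm p)\<^sup>2"
    unfolding eqv by (rule ex)
  thus ?thesis by (simp add: Vd_def field_simps)
qed

lemma ii_scalar:
  fixes th gm b G0 Gd GD V0 Pd PD Nd ND :: real
  assumes "th \<ge> 0" "gm * (G0 + Gd) \<le> V0 - (V0 + Pd + Nd/2) - Nd/2"
  shows "th*gm*(b*(G0 + GD) - (b-1)*G0) \<le> th*b*(V0 - (V0 + PD + ND/2)) + th*(b*PD - Pd)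
     + th*gm*(b*GD - Gd) + th/2*(b*ND - Nd) - th/2*Nd"
proof -
  have "th*b*(V0 - (V0 + PD + ND/2)) + th*(b*PD - Pd) + th*gm*(b*GD - Gd) + th/2*(b*ND - Nd) - th/2*Nd
     - th*gm*(b*(G0 + GD) - (b-1)*G0) = th * ((V0 - (V0 + Pd + Nd/2) - Nd/2) - gm * (G0 + Gd))"
    by (simp add: field_simps)
  moreover have "th * ((V0 - (V0 + Pd + Nd/2) - Nd/2) - gm * (G0 + Gd)) \<ge> 0"
    using assms by simp
  ultimately show ?thesis by linarith
qed

lemma ii_lemma:
  fixes g x d D u :: "real^'n::finite"
  assumes th: "th \<ge> 0"
    and TP: "gm * inner g (x + d - u) \<le> Vd x u - Vd (x + d) u - (norm d)\<^sup>2 / 2"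
  shows "th*gm*(b*inner g (x + D - u) - (b-1)*inner g (x - u))
     \<le> th*b*(Vd x u - Vd (x + D) u) + th*inner (b *\<^sub>R D - d) (x - u)
       + th*gm*(b*inner g D - inner g d) + th/2*(b*(norm D)\<^sup>2 - (norm d)\<^sup>2) - th/2*(norm d)\<^sup>2"
proof -
  have e1: "inner g (x + D - u) = inner g (x - u) + inner g D" by (simp add: inner_simps)
  have e2: "inner g (x + d - u) = inner g (x - u) + inner g d" by (simp add: inner_simps)
  have e3: "inner (b *\<^sub>R D - d) (x - u) = b * inner D (x - u) - inner d (x - u)" by (simp add: inner_simps right_diff_distrib)
  show ?thesis
    using ii_scalar[OF th, of gm "inner g (x - u)" "inner g d" "Vd x u" "inner d (x - u)" "(norm d)\<^sup>2" "b" "inner g D" "inner D (x - u)" "(norm D)\<^sup>2"]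
      TP unfolding e1 e2 e3 Vd_add by simp
qed

lemma iii_lemma:
  fixes Fn Ft Fp x D u :: "real^'n::finite"
  shows "th*gm*(b*inner Fn (x + D - u) - (b-1)*inner Ft (x - u))
    = th*gm*(b*inner (Ft + lm *\<^sub>R (Ft - Fp)) (x + D - u) - (b-1)*inner (Ft + lm *\<^sub>R (Ft - Fp)) (x - u))
      + th*gm*b*inner (Fn - Ft) (x + D - u) - th*gm*lm*inner (Ft - Fp) (x - u)
      - th*gm*b*lm*inner (Ft - Fp) D"
  by (simp add: inner_simps algebra_simps)

lemma ghost_lemma:
  fixes xi v u :: "real^'n::finite"
  assumes "cc > 0"
  shows "th * inner xi (v - u) = cc * (Vd v u - Vd (v - (th/cc) *\<^sub>R xi) u) + th\<^sup>2/(2*cc) * (norm xi)\<^sup>2"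
proof -
  have "Vd (v - (th/cc) *\<^sub>R xi) u = Vd v u + inner (- ((th/cc) *\<^sub>R xi)) (v - u) + (norm (- ((th/cc) *\<^sub>R xi)))\<^sup>2 / 2"
    using Vd_add[of v "- ((th/cc) *\<^sub>R xi)" u] by simp
  also have "(norm (- ((th/cc) *\<^sub>R xi)))\<^sup>2 = (th/cc)\<^sup>2 * (norm xi)\<^sup>2"
    by (simp only: norm_minus_cancel norm_scaleR power_mult_distrib power2_abs)
  also have "Vd v u + inner (- ((th/cc) *\<^sub>R xi)) (v - u) + (th/cc)\<^sup>2 * (norm xi)\<^sup>2 / 2 = Vd v u - (th/cc) * inner xi (v - u) + (th/cc)\<^sup>2 * (norm xi)\<^sup>2 / 2"
    by simp
  finally have E: "Vd (v - (th/cc) *\<^sub>R xi) u = Vd v u - (th/cc) * inner xi (v - u) + (th/cc)\<^sup>2 * (norm xi)\<^sup>2 / 2" .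
  have "cc * (Vd v u - Vd (v - (th/cc) *\<^sub>R xi) u) = cc * ((th/cc) * inner xi (v - u)) - cc * ((th/cc)\<^sup>2 * (norm xi)\<^sup>2 / 2)"
    unfolding E by (simp add: algebra_simps)
  also have "cc * ((th/cc) * inner xi (v - u)) = th * inner xi (v - u)" using assms by simp
  also have "cc * ((th/cc)\<^sup>2 * (norm xi)\<^sup>2 / 2) = th\<^sup>2/(2*cc) * (norm xi)\<^sup>2"
    using assms by (simp add: power2_eq_square field_simps)
  finally show ?thesis by simp
qed

lemma xi_norm:
  fixes d :: "real^'n::finite"
  shows "(norm (b *\<^sub>R blk_part blk i d - d))\<^sup>2
     = (b - 2) * (b * (norm (blk_part blk i d))\<^sup>2 - (norm d)\<^sup>2) + (b - 1) * (norm d)\<^sup>2"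
proof -
  have "(norm (b *\<^sub>R blk_part blk i d - d))\<^sup>2 = b\<^sup>2 * (norm (blk_part blk i d))\<^sup>2 - 2 * b * inner (blk_part blk i d) d + (norm d)\<^sup>2"
    by (simp add: norm_sq_diff_expand power_mult_distrib)
  also have "inner (blk_part blk i d) d = (norm (blk_part blk i d))\<^sup>2" by (simp add: bp_norm2)
  finally show ?thesis by (simp add: algebra_simps power2_eq_square)
qed



lemma er_scalar:
  fixes th th' gm lm b Lb X Y q :: real
  assumes "th \<ge> 0" "gm \<ge> 0" "lm \<ge> 0" "b \<ge> 0" "X \<ge> 0" "Y \<ge> 0"
    and q: "\<bar>q\<bar> \<le> Lb * X * Y" and c: "16 * Lb\<^sup>2 * gm\<^sup>2 * lm\<^sup>2 * th \<le> th'"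
  shows "- (th * gm * b * lm * q) \<le> (b * th * Y\<^sup>2 + b * th' * X\<^sup>2) / 8"
proof -
  define z where "z = gm * lm * \<bar>Lb\<bar> * X"
  have z0: "z \<ge> 0" using assms by (simp add: z_def)
  have q2: "\<bar>q\<bar> \<le> \<bar>Lb\<bar> * X * Y"
    using q assms by (smt (verit) abs_ge_self mult_right_mono)
  have "th * gm * lm * \<bar>q\<bar> \<le> th * gm * lm * (\<bar>Lb\<bar> * X * Y)"
    using q2 assms by (intro mult_left_mono) auto
  also have "\<dots> = th * Y * z" by (simp add: z_def algebra_simps)
  also have "\<dots> \<le> th * Y\<^sup>2 / 8 + 2 * th * z\<^sup>2"
  proof -
    have "0 \<le> th * (Y - 4 * z)\<^sup>2" using assms by simp
    thus ?thesis by (simp add: power2_eq_square algebra_simps)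
  qed
  finally have A0: "th * gm * lm * \<bar>q\<bar> \<le> th * Y\<^sup>2 / 8 + 2 * th * z\<^sup>2" .
  have "2 * th * z\<^sup>2 = (16 * Lb\<^sup>2 * gm\<^sup>2 * lm\<^sup>2 * th) * X\<^sup>2 / 8"
    by (simp add: z_def power_mult_distrib power2_abs)
  also have "\<dots> \<le> th' * X\<^sup>2 / 8" using c by (intro divide_right_mono mult_right_mono) auto
  finally have A: "th * gm * lm * \<bar>q\<bar> \<le> th * Y\<^sup>2 / 8 + th' * X\<^sup>2 / 8" using A0 by linarith
  have "- (th * gm * b * lm * q) \<le> b * (th * gm * lm * \<bar>q\<bar>)"
  proof -
    have "- q \<le> \<bar>q\<bar>" by simp
    hence "(th * gm * b * lm) * (- q) \<le> (th * gm * b * lm) * \<bar>q\<bar>" using assms by (intro mult_left_mono) auto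
    thus ?thesis by (simp add: algebra_simps)
  qed
  also have "\<dots> \<le> b * (th * Y\<^sup>2 / 8 + th' * X\<^sup>2 / 8)" using A assms by (intro mult_left_mono) auto
  finally show ?thesis by (simp add: algebra_simps add_divide_distrib)
qed

lemma fin_scalar:
  fixes th gm b L D Z q :: real
  assumes "th \<ge> 0" "gm \<ge> 0" "b \<ge> 0" "D \<ge> 0" "Z \<ge> 0"
    and q: "\<bar>q\<bar> \<le> L * D * Z" and c: "4 * L\<^sup>2 * gm\<^sup>2 \<le> 1"
  shows "th * gm * b * q \<le> th * b * (Z\<^sup>2 / 2 + D\<^sup>2 / 8)"
proof -
  have q2: "\<bar>q\<bar> \<le> \<bar>L\<bar> * D * Z"
    using q assms by (smt (verit) abs_ge_self mult_right_mono)
  have "gm * q \<le> gm * (\<bar>L\<bar> * D * Z)"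
    using q2 assms by (intro mult_left_mono) auto
  also have "\<dots> \<le> Z\<^sup>2 / 2 + (gm * \<bar>L\<bar> * D)\<^sup>2 / 2"
  proof -
    have "0 \<le> (Z - gm * \<bar>L\<bar> * D)\<^sup>2" by simp
    thus ?thesis by (simp add: power2_eq_square algebra_simps)
  qed
  also have "(gm * \<bar>L\<bar> * D)\<^sup>2 = (4 * L\<^sup>2 * gm\<^sup>2) * D\<^sup>2 / 4"
    by (simp add: power_mult_distrib power2_abs)
  also have "\<dots> \<le> D\<^sup>2 / 4"
  proof -
    have "(4 * L\<^sup>2 * gm\<^sup>2) * D\<^sup>2 \<le> 1 * D\<^sup>2" using c by (intro mult_right_mono) auto
    thus ?thesis by simp
  qed
  finally have "gm * q \<le> Z\<^sup>2 / 2 + D\<^sup>2 / 8" by simp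
  hence "(th * b) * (gm * q) \<le> (th * b) * (Z\<^sup>2 / 2 + D\<^sup>2 / 8)" using assms by (intro mult_left_mono) auto
  thus ?thesis by (simp add: algebra_simps)
qed



locale path =
  fixes blk :: "'n::finite \<Rightarrow> nat" and b k :: nat and Xi :: "nat \<Rightarrow> (real^'n) set"
    and F :: "real^'n \<Rightarrow> real^'n" and L Lbar :: real
    and gam lam th :: "nat \<Rightarrow> real" and xs hh :: "nat \<Rightarrow> real^'n" and ii :: "nat \<Rightarrow> nat"
    and u :: "real^'n"
  assumes blk: "\<forall>j. blk j < b" and b1: "b \<ge> 1" and k1: "k \<ge> 1"
    and xsX: "\<forall>t \<le> k+1. xs t \<in> prod_set blk b Xi"
    and x01: "xs 0 = xs 1"
    and stp: "\<forall>t\<in>{1..k}. xs (t+1) = xs t + blk_part blk (ii t) (hh t - xs t)"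
    and ii: "\<forall>t\<in>{1..k}. ii t < b"
    and TP: "\<forall>t\<in>{1..k}. gam t * inner (F (xs t) + lam t *\<^sub>R (F (xs t) - F (xs (t-1)))) (hh t - u)
                \<le> Vd (xs t) u - Vd (hh t) u - Vd (xs t) (hh t)"
    and uX: "u \<in> prod_set blk b Xi"
    and F_lip: "\<forall>y1\<in>prod_set blk b Xi. \<forall>y2\<in>prod_set blk b Xi.
                  norm (F y1 - F y2) \<le> L * norm (y1 - y2)"
    and Fi_lip: "\<forall>i<b. \<forall>y1\<in>prod_set blk b Xi. \<forall>y2\<in>prod_set blk b Xi.
                  norm (blk_part blk i (F y1) - blk_part blk i (F y2)) \<le> Lbar * norm (y1 - y2)"
    and F_mono: "\<forall>y1\<in>prod_set blk b Xi. \<forall>y2\<in>prod_set blk b Xi.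
                  inner (F y1 - F y2) (y1 - y2) \<ge> 0"
    and gam_nonneg: "\<forall>t. gam t \<ge> 0"
    and lam_nonneg: "\<forall>t. lam t \<ge> 0"
    and th_nn: "\<forall>t. th t \<ge> 0"
    and th_eq: "\<forall>t\<in>{1..k}. th (t + 1) * gam (t + 1) * lam (t + 1) = th t * gam t * real b"
    and th_ge: "\<forall>t\<in>{1..k}. th (t - 1) * gam (t - 1) * real b \<ge> th t * gam t * (real b - 1)"
    and th_L: "\<forall>t\<in>{1..k}. th (t - 1) \<ge> 16 * Lbar\<^sup>2 * (gam t)\<^sup>2 * (lam t)\<^sup>2 * th t"
    and th_dec: "\<forall>t\<in>{1..k}. th t \<le> th (t - 1)"
    and Lk: "4 * L\<^sup>2 * (gam k)\<^sup>2 \<le> 1"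
    and th1: "th 1 > 0"
begin

definition "gg t = F (xs t) + lam t *\<^sub>R (F (xs t) - F (xs (t-1)))"
definition "dd t = hh t - xs t"
definition "Dl t = xs (t+1) - xs t"
definition "cc = 4 * th 1 * real b"
definition "xi t = real b *\<^sub>R Dl t - dd t"
definition "vv t = xs 1 - (1/cc) *\<^sub>R (\<Sum>s\<in>{1..<t}. th s *\<^sub>R xi s)"
definition "kap t = 3 * th t / 4 + (th t)\<^sup>2 * (real b - 2) / (2 * cc)"
definition "RR = (\<Sum>t=1..k. th t * inner (xi t) (xs t - vv t)
      + th t * gam t * (real b * inner (gg t) (Dl t) - inner (gg t) (dd t))
      + kap t * (real b * (norm (Dl t))\<^sup>2 - (norm (dd t))\<^sup>2))"

lemma cc_pos: "cc > 0" using th1 b1 by (simp add: cc_def)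

lemma th_le_th1: "t \<in> {1..k} \<Longrightarrow> th t \<le> th 1"
proof (induction t)
  case 0 then show ?case by simp
next
  case (Suc t)
  show ?case
  proof (cases "t = 0")
    case True then show ?thesis by simp
  next
    case False
    hence "th (Suc t) \<le> th t" using th_dec Suc.prems by (metis diff_Suc_1)
    moreover have "th t \<le> th 1" using Suc False by auto
    ultimately show ?thesis by simp
  qed
qed

lemma Dl_eq: "t \<in> {1..k} \<Longrightarrow> Dl t = blk_part blk (ii t) (dd t)"
  using stp by (simp add: Dl_def dd_def)

lemma vv_next: "t \<ge> 1 \<Longrightarrow> vv (t+1) = vv t - (th t / cc) *\<^sub>R xi t"
proof -
  assume t: "t \<ge> 1"
  have "{1..<t+1} = insert t {1..<t}" using t by auto
  hence "(\<Sum>s\<in>{1..<t+1}. th s *\<^sub>R xi s) = th t *\<^sub>R xi t + (\<Sum>s\<in>{1..<t}. th s *\<^sub>R xi s)" by simp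
  thus ?thesis by (simp add: vv_def algebra_simps)
qed

lemma vv1: "vv 1 = xs 1" by (simp add: vv_def)

end



context path begin

definition "Wt t = th t * gam t * (real b * inner (F (xs (t+1))) (xs (t+1) - u) - (real b - 1) * inner (F (xs t)) (xs t - u))"
definition "ee t = th t * gam t * real b * inner (F (xs (t+1)) - F (xs t)) (xs (t+1) - u)"
definition "YY t = real b * th t * (norm (Dl t))\<^sup>2"
definition "Zt t = th t * inner (xi t) (xs t - vv t) + th t * gam t * (real b * inner (gg t) (Dl t) - inner (gg t) (dd t))
   + (th t / 2 + (th t)\<^sup>2 * (real b - 2) / (2 * cc)) * (real b * (norm (Dl t))\<^sup>2 - (norm (dd t))\<^sup>2)
   + (- th t / 2 + (th t)\<^sup>2 * (real b - 1) / (2 * cc)) * (norm (dd t))\<^sup>2"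

lemma per_t:
  assumes t: "t \<in> {1..k}"
  shows "Wt t \<le> th t * real b * (Vd (xs t) u - Vd (xs (t+1)) u) + cc * (Vd (vv t) u - Vd (vv (t+1)) u)
     + (ee t - ee (t-1)) + (YY t + YY (t-1)) / 8 + Zt t"
proof -
  let ?x = "xs t" and ?D = "Dl t" and ?d = "dd t" and ?g = "gg t"
  let ?Ft = "F (xs t)" and ?Fp = "F (xs (t-1))" and ?Fn = "F (xs (t+1))"
  have nx: "xs (t+1) = xs t + Dl t" by (simp add: Dl_def)
  have hh: "hh t = xs t + dd t" by (simp add: dd_def)
  have a: "Wt t = th t * gam t * (real b * inner ?g (?x + ?D - u) - (real b - 1) * inner ?g (?x - u))
      + ee t - th t * gam t * lam t * inner (?Ft - ?Fp) (?x - u) - th t * gam t * real b * lam t * inner (?Ft - ?Fp) ?D"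
    unfolding Wt_def ee_def gg_def nx by (rule iii_lemma)
  have b: "th t * gam t * lam t * inner (?Ft - ?Fp) (?x - u) = ee (t-1)"
  proof (cases "t = 1")
    case True then show ?thesis using x01 by (simp add: ee_def)
  next
    case False
    hence "t - 1 \<in> {1..k}" "t - 1 + 1 = t" using t by auto
    hence "th t * gam t * lam t = th (t-1) * gam (t-1) * real b" using th_eq by metis
    then show ?thesis using \<open>t - 1 + 1 = t\<close> by (simp add: ee_def)
  qed
  have TPt: "gam t * inner ?g (?x + ?d - u) \<le> Vd ?x u - Vd (?x + ?d) u - (norm ?d)\<^sup>2 / 2"
  proof -
    have v: "Vd (xs t) (hh t) = (norm ?d)\<^sup>2 / 2" by (simp add: Vd_def dd_def norm_minus_commute)
    have "gam t * inner ?g (hh t - u) \<le> Vd ?x u - Vd (hh t) u - Vd ?x (hh t)"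
      unfolding gg_def using TP t by blast
    thus ?thesis using v unfolding hh by linarith
  qed
  define Q where "Q = real b * (norm ?D)\<^sup>2 - (norm ?d)\<^sup>2"
  define N where "N = (norm ?d)\<^sup>2"
  define P where "P = (norm (xi t))\<^sup>2"
  have c: "th t * gam t * (real b * inner ?g (?x + ?D - u) - (real b - 1) * inner ?g (?x - u))
     \<le> th t * real b * (Vd ?x u - Vd (?x + ?D) u) + th t * inner (xi t) (?x - u)
       + th t * gam t * (real b * inner ?g ?D - inner ?g ?d) + th t / 2 * Q - th t / 2 * N"
    using ii_lemma[OF _ TPt, of "th t" "real b" ?D] th_nn unfolding Q_def N_def xi_def by auto
  have d: "th t * inner (xi t) (?x - u) = th t * inner (xi t) (?x - vv t) + cc * (Vd (vv t) u - Vd (vv (t+1)) u)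
      + (th t)\<^sup>2 / (2 * cc) * P"
  proof -
    have "th t * inner (xi t) (?x - u) = th t * inner (xi t) (?x - vv t) + th t * inner (xi t) (vv t - u)"
      by (simp add: inner_simps algebra_simps)
    also have "th t * inner (xi t) (vv t - u) = cc * (Vd (vv t) u - Vd (vv (t+1)) u) + (th t)\<^sup>2 / (2 * cc) * P"
      unfolding P_def using ghost_lemma[OF cc_pos, of "th t" "xi t" "vv t" u] vv_next[of t] t by simp
    finally show ?thesis by simp
  qed
  have e: "P = (real b - 2) * Q + (real b - 1) * N"
    unfolding P_def Q_def N_def xi_def Dl_eq[OF t] by (rule xi_norm)
  have g: "(th t)\<^sup>2 / (2 * cc) * P = (th t)\<^sup>2 * (real b - 2) / (2 * cc) * Q + (th t)\<^sup>2 * (real b - 1) / (2 * cc) * N"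
    using cc_pos unfolding e by (simp add: field_simps)
  have z: "Zt t = th t * inner (xi t) (xs t - vv t) + th t * gam t * (real b * inner (gg t) (Dl t) - inner (gg t) (dd t))
     + (th t / 2 + (th t)\<^sup>2 * (real b - 2) / (2 * cc)) * Q + (- th t / 2 + (th t)\<^sup>2 * (real b - 1) / (2 * cc)) * N"
    by (simp only: Zt_def Q_def N_def)
  have z2: "(th t / 2 + (th t)\<^sup>2 * (real b - 2) / (2 * cc)) * Q = th t / 2 * Q + (th t)\<^sup>2 * (real b - 2) / (2 * cc) * Q"
    by (rule distrib_right)
  have z3: "(- th t / 2 + (th t)\<^sup>2 * (real b - 1) / (2 * cc)) * N = - (th t / 2 * N) + (th t)\<^sup>2 * (real b - 1) / (2 * cc) * N"
    by (simp only: distrib_right mult_minus_left divide_minus_left)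
  have f: "- (th t * gam t * real b * lam t * inner (?Ft - ?Fp) ?D) \<le> (YY t + YY (t-1)) / 8"
  proof -
    have it: "ii t < b" using ii t by blast
    have Xt: "xs t \<in> prod_set blk b Xi" "xs (t-1) \<in> prod_set blk b Xi" using xsX t by auto
    have D1: "xs t - xs (t-1) = Dl (t-1)" using t by (simp add: Dl_def)
    have "inner (?Ft - ?Fp) ?D = inner (blk_part blk (ii t) (?Ft - ?Fp)) ?D"
      unfolding Dl_eq[OF t] by (rule bp_inner2)
    hence "\<bar>inner (?Ft - ?Fp) ?D\<bar> \<le> norm (blk_part blk (ii t) (?Ft - ?Fp)) * norm ?D"
      by (simp add: Cauchy_Schwarz_ineq2)
    also have "\<dots> \<le> Lbar * norm (Dl (t-1)) * norm ?D"
    proof (rule mult_right_mono)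
      have "norm (blk_part blk (ii t) ?Ft - blk_part blk (ii t) ?Fp) \<le> Lbar * norm (xs t - xs (t-1))"
        using Fi_lip it Xt by blast
      thus "norm (blk_part blk (ii t) (?Ft - ?Fp)) \<le> Lbar * norm (Dl (t-1))" unfolding D1 bp_diff .
    qed simp
    finally have q: "\<bar>inner (?Ft - ?Fp) ?D\<bar> \<le> Lbar * norm (Dl (t-1)) * norm ?D" .
    have "- (th t * gam t * real b * lam t * inner (?Ft - ?Fp) ?D)
        \<le> (real b * th t * (norm ?D)\<^sup>2 + real b * th (t-1) * (norm (Dl (t-1)))\<^sup>2) / 8"
    proof (rule er_scalar[OF _ _ _ _ _ _ q])
      show "16 * Lbar\<^sup>2 * (gam t)\<^sup>2 * (lam t)\<^sup>2 * th t \<le> th (t-1)" using th_L t by blast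
    qed (use th_nn gam_nonneg lam_nonneg in auto)
    thus ?thesis by (simp add: YY_def)
  qed
  show ?thesis
    using a b c d g z z2 z3 f unfolding nx[symmetric] by linarith
qed

end



lemma p6_scalar:
  fixes M1 N1 th A B Q N b D Z YY RRt :: real
  assumes "Q = b * D - N" "Z = M1 + N1 + (th/2 + A) * Q + (- th/2 + B) * N" "YY = b * th * D"
    "RRt = M1 + N1 + (3 * th / 4 + A) * Q" "B \<le> th / 4" "N \<ge> 0"
  shows "Z + YY / 4 \<le> RRt"
proof -
  have "RRt - (Z + YY / 4) = (th / 4 - B) * N" unfolding assms(2,3,4) unfolding assms(1) by (simp add: field_simps)
  moreover have "(th / 4 - B) * N \<ge> 0" using assms(5,6) by simp
  ultimately show ?thesis by linarith
qed

context path begin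

lemma B_bound: "t \<in> {1..k} \<Longrightarrow> (th t)\<^sup>2 * (real b - 1) / (2 * cc) \<le> th t / 4"
proof -
  assume t: "t \<in> {1..k}"
  have "(th t)\<^sup>2 * (real b - 1) \<le> th t * (th 1 * real b)"
    unfolding power2_eq_square mult.assoc
    using th_le_th1[OF t] th_nn b1 by (intro mult_left_mono mult_mono) auto
  hence "(th t)\<^sup>2 * (real b - 1) / (2 * cc) \<le> th t * (th 1 * real b) / (2 * cc)"
    using cc_pos by (intro divide_right_mono) auto
  also have "\<dots> = th t / 8" using th1 b1 by (simp add: cc_def)
  also have "\<dots> \<le> th t / 4" using th_nn by (simp add: field_simps)
  finally show ?thesis .
qed

lemma p6: "t \<in> {1..k} \<Longrightarrow> Zt t + YY t / 4 \<le> th t * inner (xi t) (xs t - vv t)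
      + th t * gam t * (real b * inner (gg t) (Dl t) - inner (gg t) (dd t))
      + kap t * (real b * (norm (Dl t))\<^sup>2 - (norm (dd t))\<^sup>2)"
proof -
  assume t: "t \<in> {1..k}"
  show ?thesis
  proof (rule p6_scalar[where Q = "real b * (norm (Dl t))\<^sup>2 - (norm (dd t))\<^sup>2" and N = "(norm (dd t))\<^sup>2"
        and D = "(norm (Dl t))\<^sup>2" and b = "real b" and th = "th t" and B = "(th t)\<^sup>2 * (real b - 1) / (2 * cc)"
        and A = "(th t)\<^sup>2 * (real b - 2) / (2 * cc)"])
    show "(th t)\<^sup>2 * (real b - 1) / (2 * cc) \<le> th t / 4" by (rule B_bound[OF t])
  qed (auto simp: Zt_def YY_def kap_def)
qed

lemma path_bound:
  "(\<Sum>t=1..k-1. (th t * gam t * real b - th (t + 1) * gam (t + 1) * (real b - 1)) * inner (F u) (xs (t + 1) - u))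
     + (th k * gam k * real b) * inner (F u) (xs (k + 1) - u)
   \<le> th 1 * (gam 1 * (real b - 1) * inner (F (xs 1)) (xs 1 - u) + 5 * real b * Vd (xs 1) u) + RR"
proof -
  define a where "a t = th t * gam t * real b * inner (F (xs (t+1))) (xs (t+1) - u)" for t
  define c where "c t = th t * gam t * (real b - 1) * inner (F (xs t)) (xs t - u)" for t
  have mono: "inner (F u) (xs t - u) \<le> inner (F (xs t)) (xs t - u)" if "t \<le> k+1" for t
  proof -
    have "inner (F (xs t) - F u) (xs t - u) \<ge> 0" using F_mono xsX uX that by blast
    thus ?thesis by (simp add: inner_diff_left)
  qed
  have s1: "(\<Sum>t=1..k-1. (th t * gam t * real b - th (t + 1) * gam (t + 1) * (real b - 1)) * inner (F u) (xs (t + 1) - u))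
     \<le> (\<Sum>t=1..k-1. a t - c (t+1))"
  proof (rule sum_mono)
    fix t assume t: "t \<in> {1..k-1}"
    have w: "th t * gam t * real b - th (t + 1) * gam (t + 1) * (real b - 1) \<ge> 0"
      using th_ge[rule_format, of "t+1"] t by auto
    have "(th t * gam t * real b - th (t + 1) * gam (t + 1) * (real b - 1)) * inner (F u) (xs (t + 1) - u)
       \<le> (th t * gam t * real b - th (t + 1) * gam (t + 1) * (real b - 1)) * inner (F (xs (t+1))) (xs (t + 1) - u)"
      using mono[of "t+1"] t w by (intro mult_left_mono) auto
    also have "\<dots> = a t - c (t+1)" by (simp add: a_def c_def algebra_simps)
    finally show "(th t * gam t * real b - th (t + 1) * gam (t + 1) * (real b - 1)) * inner (F u) (xs (t + 1) - u) \<le> a t - c (t+1)" .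
  qed
  have s2: "(th k * gam k * real b) * inner (F u) (xs (k + 1) - u) \<le> a k"
    unfolding a_def using mono[of "k+1"] th_nn gam_nonneg b1 by (intro mult_left_mono) auto
  have s3: "(\<Sum>t=1..k-1. a t - c (t+1)) + a k = c 1 + (\<Sum>t=1..k. Wt t)"
    using shiftA[OF k1, of a c] by (simp add: a_def c_def Wt_def algebra_simps)
  define Vx where "Vx t = Vd (xs t) u" for t
  define Vv where "Vv t = Vd (vv t) u" for t
  have s4: "(\<Sum>t=1..k. Wt t) \<le> (\<Sum>t=1..k. th t * real b * (Vx t - Vx (t+1))) + (\<Sum>t=1..k. cc * Vv t - cc * Vv (t+1))
     + (\<Sum>t=1..k. ee t - ee (t-1)) + (\<Sum>t=1..k. YY t) / 8 + (\<Sum>t=1..k. YY (t-1)) / 8 + (\<Sum>t=1..k. Zt t)"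
  proof -
    have "(\<Sum>t=1..k. Wt t) \<le> (\<Sum>t=1..k. th t * real b * (Vx t - Vx (t+1)) + (cc * Vv t - cc * Vv (t+1))
       + (ee t - ee (t-1)) + YY t / 8 + YY (t-1) / 8 + Zt t)"
      by (rule sum_mono) (use per_t in \<open>auto simp: Vx_def Vv_def algebra_simps add_divide_distrib\<close>)
    also have "\<dots> = (\<Sum>t=1..k. th t * real b * (Vx t - Vx (t+1))) + (\<Sum>t=1..k. cc * Vv t - cc * Vv (t+1))
     + (\<Sum>t=1..k. ee t - ee (t-1)) + (\<Sum>t=1..k. YY t) / 8 + (\<Sum>t=1..k. YY (t-1)) / 8 + (\<Sum>t=1..k. Zt t)"
      by (simp only: sum.distrib sum_divide_distrib)
    finally show ?thesis .
  qed
  have p1: "(\<Sum>t=1..k. th t * real b * (Vx t - Vx (t+1))) \<le> th 1 * real b * Vx 1 - th k * real b * Vx (k+1)"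
    by (rule tele_mono[OF k1]) (use th_dec b1 in \<open>auto simp: Vx_def Vd_def intro: mult_right_mono\<close>)
  have p2: "(\<Sum>t=1..k. cc * Vv t - cc * Vv (t+1)) = cc * Vv 1 - cc * Vv (k+1)"
    by (rule tele_gen)
  have p3: "(\<Sum>t=1..k. ee t - ee (t-1)) = ee k - ee 0" by (rule tele2)
  have ee0: "ee 0 = 0" using x01 by (simp add: ee_def)
  have YY0: "YY 0 = 0" using x01 by (simp add: YY_def Dl_def)
  have p4: "(\<Sum>t=1..k. YY (t-1)) + YY k = (\<Sum>t=1..k. YY t)" by (rule shiftY[where Y=YY, OF YY0])
  have p5: "ee k \<le> th k * real b * Vx (k+1) + YY k / 8"
  proof -
    have Xk: "xs (k+1) \<in> prod_set blk b Xi" "xs k \<in> prod_set blk b Xi" using xsX by auto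
    have "\<bar>inner (F (xs (k+1)) - F (xs k)) (xs (k+1) - u)\<bar> \<le> norm (F (xs (k+1)) - F (xs k)) * norm (xs (k+1) - u)"
      by (rule Cauchy_Schwarz_ineq2)
    also have "\<dots> \<le> L * norm (Dl k) * norm (xs (k+1) - u)"
      using F_lip Xk by (intro mult_right_mono) (auto simp: Dl_def)
    finally have q: "\<bar>inner (F (xs (k+1)) - F (xs k)) (xs (k+1) - u)\<bar> \<le> L * norm (Dl k) * norm (xs (k+1) - u)" .
    have "ee k \<le> th k * real b * ((norm (xs (k+1) - u))\<^sup>2 / 2 + (norm (Dl k))\<^sup>2 / 8)"
      unfolding ee_def by (rule fin_scalar[OF _ _ _ _ _ q Lk]) (use th_nn gam_nonneg in auto)
    thus ?thesis by (simp add: Vx_def YY_def Vd_def algebra_simps)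
  qed
  have p6s: "(\<Sum>t=1..k. Zt t) + (\<Sum>t=1..k. YY t) / 4 \<le> RR"
  proof -
    have "(\<Sum>t=1..k. Zt t) + (\<Sum>t=1..k. YY t) / 4 = (\<Sum>t=1..k. Zt t + YY t / 4)"
      by (simp add: sum.distrib sum_divide_distrib)
    also have "\<dots> \<le> RR" unfolding RR_def by (rule sum_mono) (use p6 in auto)
    finally show ?thesis .
  qed
  have Vv1: "Vv 1 = Vx 1" unfolding Vv_def Vx_def vv1 ..
  have Vvk: "Vv (k+1) \<ge> 0" by (simp add: Vv_def Vd_def)
  have ccv: "cc * Vv (k+1) \<ge> 0" using cc_pos Vvk by simp
  have fin: "th 1 * real b * Vx 1 + cc * Vx 1 = th 1 * (5 * real b * Vd (xs 1) u)"
    by (simp add: cc_def Vx_def algebra_simps)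
  have c1: "c 1 = th 1 * (gam 1 * (real b - 1) * inner (F (xs 1)) (xs 1 - u))" by (simp add: c_def algebra_simps)
  show ?thesis
    using s1 s2 s3 s4 p1 p2 p3 ee0 p4 p5 p6s Vv1 ccv fin c1
    by (simp add: algebra_simps)
qed

end



lemma bp_sum_pick:
  assumes "i < b"
  shows "blk_part blk i (\<Sum>j<b. blk_part blk j (y j)) = blk_part blk i (y i)"
proof -
  have "blk_part blk i (\<Sum>j<b. blk_part blk j (y j)) = (\<Sum>j<b. blk_part blk i (blk_part blk j (y j)))"
    by (simp add: blk_part_def vec_eq_iff)
  also have "\<dots> = (\<Sum>j\<in>{i}. blk_part blk i (blk_part blk j (y j)))"
    using assms by (intro sum.mono_neutral_right) (auto simp: bp_orth)
  also have "\<dots> = blk_part blk i (y i)" by (simp add: bp_idem)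
  finally show ?thesis .
qed

locale sboe =
  fixes blk :: "'n::finite \<Rightarrow> nat" and b k :: nat
    and Xi :: "nat \<Rightarrow> (real^'n) set"
    and F :: "real^'n \<Rightarrow> real^'n" and L Lbar :: real
    and gam lam :: "nat \<Rightarrow> real" and x0 :: "real^'n"
    and x :: "(nat \<Rightarrow> nat) \<Rightarrow> nat \<Rightarrow> real^'n"
  assumes b_pos: "b \<ge> 1"
    and blk_range: "\<forall>j. blk j < b"
    and Xi_convex: "\<forall>i<b. convex (Xi i)"
    and F_lip: "\<forall>y1\<in>prod_set blk b Xi. \<forall>y2\<in>prod_set blk b Xi.
                  norm (F y1 - F y2) \<le> L * norm (y1 - y2)"
    and Fi_lip: "\<forall>i<b. \<forall>y1\<in>prod_set blk b Xi. \<forall>y2\<in>prod_set blk b Xi.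
                  norm (blk_part blk i (F y1) - blk_part blk i (F y2)) \<le> Lbar * norm (y1 - y2)"
    and F_mono: "\<forall>y1\<in>prod_set blk b Xi. \<forall>y2\<in>prod_set blk b Xi.
                  inner (F y1 - F y2) (y1 - y2) \<ge> 0"
    and gam_nonneg: "\<forall>t. gam t \<ge> 0"
    and lam_nonneg: "\<forall>t. lam t \<ge> 0"
    and k_pos: "k \<ge> 1"
    and x0_in: "x0 \<in> prod_set blk b Xi"
    and x_init: "\<forall>w\<in>idx_seqs b k. x w 0 = x0 \<and> x w 1 = x0"
    and x_step: "\<forall>w\<in>idx_seqs b k. \<forall>t\<in>{1..k}.
                  sboe_step blk Xi F (gam t) (lam t) (w t) (x w (t - 1)) (x w t) (x w (t + 1))"
begin

abbreviation "\<Omega> \<equiv> idx_seqs b k"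
abbreviation "XX \<equiv> prod_set blk b Xi"

lemma prefix: "w \<in> \<Omega> \<Longrightarrow> t \<in> {1..k} \<Longrightarrow> j < b \<Longrightarrow> s \<le> t \<Longrightarrow> x (w(t := j)) s = x w s"
proof (induction s rule: less_induct)
  case (less s)
  have w': "w(t := j) \<in> \<Omega>" using idx_upd less.prems by blast
  show ?case
  proof (cases "s \<le> 1")
    case True
    then show ?thesis using x_init less.prems(1) w' by (metis le_Suc_eq le_zero_eq One_nat_def)
  next
    case False
    then obtain s' where s': "s = s' + 1" "s' \<ge> 1" by (metis add.commute le_add_diff_inverse not_le less_imp_le_nat plus_1_eq_Suc Suc_leI)
    have s'k: "s' \<in> {1..k}" using s' less.prems by auto
    have neq: "s' \<noteq> t" using s' less.prems by auto
    have st1: "sboe_step blk Xi F (gam s') (lam s') (w s') (x w (s' - 1)) (x w s') (x w (s' + 1))"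
      using x_step less.prems(1) s'k by blast
    have st2: "sboe_step blk Xi F (gam s') (lam s') ((w(t := j)) s') (x (w(t := j)) (s' - 1)) (x (w(t := j)) s') (x (w(t := j)) (s' + 1))"
      using x_step w' s'k by blast
    have l1: "s' - 1 < s" "s' - 1 \<le> t" "s' < s" "s' \<le> t" using s' less.prems by auto
    have ih1: "x (w(t := j)) (s' - 1) = x w (s' - 1)" by (rule less.IH[OF l1(1) less.prems(1,2,3) l1(2)])
    have ih2: "x (w(t := j)) s' = x w s'" by (rule less.IH[OF l1(3) less.prems(1,2,3) l1(4)])
    have "w s' < b" using idx_range less.prems(1) s'k by blast
    hence cv: "convex (Xi (w s'))" using Xi_convex by blast
    have "x (w(t := j)) (s' + 1) = x w (s' + 1)"
      using step_unique[OF cv _ st1] st2 neq ih1 ih2 by simp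
    then show ?thesis using s' by (simp add: fun_upd_def)
  qed
qed

lemma xX: "w \<in> \<Omega> \<Longrightarrow> t \<le> k + 1 \<Longrightarrow> x w t \<in> XX"
proof (induction t)
  case 0 then show ?case using x_init x0_in by auto
next
  case (Suc t)
  show ?case
  proof (cases "t = 0")
    case True then show ?thesis using x_init x0_in Suc.prems by auto
  next
    case False
    hence tk: "t \<in> {1..k}" using Suc.prems by auto
    have st: "sboe_step blk Xi F (gam t) (lam t) (w t) (x w (t - 1)) (x w t) (x w (t + 1))"
      using x_step Suc.prems(1) tk by blast
    have prev: "x w t \<in> XX" using Suc False by auto
    have wt: "w t < b" using idx_range Suc.prems(1) tk by blast
    show ?thesis unfolding prod_set_def
    proof (intro CollectI allI impI)
      fix i assume i: "i < b"
      show "blk_part blk i (x w (Suc t)) \<in> Xi i"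
      proof (cases "i = w t")
        case True then show ?thesis using st step_block_opt[OF st] by simp
      next
        case False
        hence "blk_part blk i (x w (t + 1)) = blk_part blk i (x w t)" using st unfolding sboe_step_def by blast
        then show ?thesis using prev i unfolding prod_set_def by simp
      qed
    qed
  qed
qed

definition "hhat w t = (\<Sum>i<b. blk_part blk i (x (w(t := i)) (t + 1)))"

lemma hhat_block: "w \<in> \<Omega> \<Longrightarrow> t \<in> {1..k} \<Longrightarrow> i < b \<Longrightarrow> blk_part blk i (hhat w t) = blk_part blk i (x (w(t := i)) (t + 1))"
  unfolding hhat_def by (rule bp_sum_pick)

lemma hhat_inv: "hhat (w(t := j)) t = hhat w t"
  by (simp add: hhat_def)

end



locale sboe_th = sboe +
  fixes th :: "nat \<Rightarrow> real"
  assumes X_bounded: "bounded (prod_set blk b Xi)"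
    and th_nn: "\<forall>t. th t \<ge> 0"
    and th_eq: "\<forall>t\<in>{1..k}. th (t + 1) * gam (t + 1) * lam (t + 1) = th t * gam t * real b"
    and th_ge: "\<forall>t\<in>{1..k}. th (t - 1) * gam (t - 1) * real b \<ge> th t * gam t * (real b - 1)"
    and th_L: "\<forall>t\<in>{1..k}. th (t - 1) \<ge> 16 * Lbar\<^sup>2 * (gam t)\<^sup>2 * (lam t)\<^sup>2 * th t"
    and th_dec: "\<forall>t\<in>{1..k}. th t \<le> th (t - 1)"
    and Lk: "4 * L\<^sup>2 * (gam k)\<^sup>2 \<le> 1"
    and th1: "th 1 > 0"
begin

lemma path_inst:
  assumes w: "w \<in> \<Omega>" and u: "u \<in> XX"
  shows "path blk b k Xi F L Lbar gam lam th (x w) (hhat w) w u"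
proof (unfold_locales)
  show "\<forall>j. blk j < b" by (rule blk_range)
  show "1 \<le> b" by (rule b_pos)
  show "1 \<le> k" by (rule k_pos)
  show "\<forall>t\<le>k + 1. x w t \<in> XX" using xX w by blast
  show "x w 0 = x w 1" using x_init w by simp
  show "\<forall>t\<in>{1..k}. x w (t + 1) = x w t + blk_part blk (w t) (hhat w t - x w t)"
  proof
    fix t assume t: "t \<in> {1..k}"
    have st: "sboe_step blk Xi F (gam t) (lam t) (w t) (x w (t - 1)) (x w t) (x w (t + 1))"
      using x_step w t by blast
    have wt: "w t < b" using idx_range w t by blast
    have "blk_part blk (w t) (hhat w t) = blk_part blk (w t) (x w (t + 1))"
      using hhat_block[OF w t wt] by simp
    hence "blk_part blk (w t) (hhat w t - x w t) = blk_part blk (w t) (x w (t + 1) - x w t)"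
      by (simp add: bp_diff)
    thus "x w (t + 1) = x w t + blk_part blk (w t) (hhat w t - x w t)"
      using step_struct[OF st] by simp
  qed
  show "\<forall>t\<in>{1..k}. w t < b" using idx_range w by blast
  show "\<forall>t\<in>{1..k}. gam t * inner (F (x w t) + lam t *\<^sub>R (F (x w t) - F (x w (t - 1)))) (hhat w t - u)
                \<le> Vd (x w t) u - Vd (hhat w t) u - Vd (x w t) (hhat w t)"
  proof
    fix t assume t: "t \<in> {1..k}"
    show "gam t * inner (F (x w t) + lam t *\<^sub>R (F (x w t) - F (x w (t - 1)))) (hhat w t - u)
                \<le> Vd (x w t) u - Vd (hhat w t) u - Vd (x w t) (hhat w t)"
    proof (rule TP_full[OF blk_range Xi_convex _ u])
      show "\<forall>i<b. blk_part blk i (hhat w t) \<in> Xi i \<and> (\<forall>v\<in>Xi i.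
        gam t * inner (blk_part blk i (F (x w t) + lam t *\<^sub>R (F (x w t) - F (x w (t - 1))))) (blk_part blk i (hhat w t))
          + Vd (blk_part blk i (x w t)) (blk_part blk i (hhat w t))
       \<le> gam t * inner (blk_part blk i (F (x w t) + lam t *\<^sub>R (F (x w t) - F (x w (t - 1))))) v + Vd (blk_part blk i (x w t)) v)"
      proof (intro allI impI)
        fix i assume i: "i < b"
        have w': "w(t := i) \<in> \<Omega>" using idx_upd w t i by blast
        have st: "sboe_step blk Xi F (gam t) (lam t) i (x (w(t := i)) (t - 1)) (x (w(t := i)) t) (x (w(t := i)) (t + 1))"
          using x_step w' t by fastforce
        have p1: "x (w(t := i)) (t - 1) = x w (t - 1)" using prefix[OF w t i] by simp
        have p2: "x (w(t := i)) t = x w t" using prefix[OF w t i] by simp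
        have hb: "blk_part blk i (hhat w t) = blk_part blk i (x (w(t := i)) (t + 1))"
          by (rule hhat_block[OF w t i])
        show "blk_part blk i (hhat w t) \<in> Xi i \<and> (\<forall>v\<in>Xi i.
          gam t * inner (blk_part blk i (F (x w t) + lam t *\<^sub>R (F (x w t) - F (x w (t - 1))))) (blk_part blk i (hhat w t))
            + Vd (blk_part blk i (x w t)) (blk_part blk i (hhat w t))
          \<le> gam t * inner (blk_part blk i (F (x w t) + lam t *\<^sub>R (F (x w t) - F (x w (t - 1))))) v + Vd (blk_part blk i (x w t)) v)"
          using step_block_opt[OF st] unfolding p1 p2 hb .
      qed
    qed
  qed
  show "u \<in> XX" by (rule u)
qed (use F_lip Fi_lip F_mono gam_nonneg lam_nonneg th_nn th_eq th_ge th_L th_dec Lk th1 in auto)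

end



context path begin

definition "phi t i = th t * inner (blk_part blk i (dd t)) (xs t - vv t)
   + th t * gam t * inner (gg t) (blk_part blk i (dd t)) + kap t * (norm (blk_part blk i (dd t)))\<^sup>2"

lemma RR_split: "RR = (\<Sum>t=1..k. real b * phi t (ii t) - (\<Sum>i<b. phi t i))"
  unfolding RR_def
proof (rule sum.cong[OF refl])
  fix t assume t: "t \<in> {1..k}"
  have s: "(\<Sum>i<b. phi t i) = th t * inner (dd t) (xs t - vv t) + th t * gam t * inner (gg t) (dd t) + kap t * (norm (dd t))\<^sup>2"
    unfolding phi_def
    by (simp add: sum.distrib sum_distrib_left[symmetric] bp_inner_sum[OF blk] bp_inner_sum2[OF blk] bp_norm_sum[OF blk])
  have p: "phi t (ii t) = th t * inner (Dl t) (xs t - vv t) + th t * gam t * inner (gg t) (Dl t) + kap t * (norm (Dl t))\<^sup>2"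
    unfolding phi_def Dl_eq[OF t] ..
  show "th t * inner (xi t) (xs t - vv t) + th t * gam t * (real b * inner (gg t) (Dl t) - inner (gg t) (dd t))
      + kap t * (real b * (norm (Dl t))\<^sup>2 - (norm (dd t))\<^sup>2) = real b * phi t (ii t) - (\<Sum>i<b. phi t i)"
    unfolding s p xi_def by (simp add: inner_simps algebra_simps)
qed

end



context sboe_th begin

lemma hhat_inv_lt:
  assumes w: "w \<in> \<Omega>" and t: "t \<in> {1..k}" and j: "j < b" and s: "s \<in> {1..<t}"
  shows "hhat (w(t := j)) s = hhat w s"
  unfolding hhat_def
proof (rule sum.cong[OF refl])
  fix i assume i: "i \<in> {..<b}"
  have sk: "s \<in> {1..k}" using s t by auto
  have ws: "w(s := i) \<in> \<Omega>" using idx_upd[OF w sk] i by auto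
  have "w(t := j, s := i) = w(s := i, t := j)" using s by (auto simp: fun_upd_twist)
  moreover have "x (w(s := i, t := j)) (s + 1) = x (w(s := i)) (s + 1)"
    using prefix[OF ws t j] s by auto
  ultimately show "blk_part blk i (x (w(t := j, s := i)) (s + 1)) = blk_part blk i (x (w(s := i)) (s + 1))"
    by simp
qed

lemma phi_inv:
  assumes w: "w \<in> \<Omega>" and t: "t \<in> {1..k}" and j: "j < b"
  shows "path.phi blk b F gam lam th (x (w(t := j))) (hhat (w(t := j))) t i
       = path.phi blk b F gam lam th (x w) (hhat w) t i"
proof -
  define w' where "w' = w(t := j)"
  have w': "w' \<in> \<Omega>" using idx_upd[OF w t j] by (simp add: w'_def)
  have P: "path blk b k Xi F L Lbar gam lam th (x w) (hhat w) w x0" by (rule path_inst[OF w x0_in])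
  have P': "path blk b k Xi F L Lbar gam lam th (x w') (hhat w') w' x0" by (rule path_inst[OF w' x0_in])
  have xe: "x w' s = x w s" if "s \<le> t" for s using prefix[OF w t j that] by (simp add: w'_def)
  have he: "hhat w' s = hhat w s" if "s \<in> {1..<t}" for s using hhat_inv_lt[OF w t j that] by (simp add: w'_def)
  have ht: "hhat w' t = hhat w t" by (simp add: w'_def hhat_inv)
  have dd_t: "path.dd (x w') (hhat w') t = path.dd (x w) (hhat w) t"
    unfolding path.dd_def[OF P] path.dd_def[OF P'] using xe[of t] ht by simp
  have xi_s: "path.xi b (x w') (hhat w') s = path.xi b (x w) (hhat w) s" if "s \<in> {1..<t}" for s
    unfolding path.xi_def[OF P] path.xi_def[OF P'] path.dd_def[OF P] path.dd_def[OF P']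
      path.Dl_def[OF P] path.Dl_def[OF P']
    using xe[of s] xe[of "s+1"] he[OF that] that by simp
  have vv_t: "path.vv b th (x w') (hhat w') t = path.vv b th (x w) (hhat w) t"
  proof -
    have "(\<Sum>s = 1..<t. th s *\<^sub>R path.xi b (x w') (hhat w') s) = (\<Sum>s = 1..<t. th s *\<^sub>R path.xi b (x w) (hhat w) s)"
      by (rule sum.cong[OF refl]) (simp add: xi_s)
    thus ?thesis unfolding path.vv_def[OF P] path.vv_def[OF P'] path.cc_def[OF P] path.cc_def[OF P']
      using xe[of 1] t by simp
  qed
  have gg_t: "path.gg F lam (x w') t = path.gg F lam (x w) t"
    unfolding path.gg_def[OF P] path.gg_def[OF P'] using xe[of t] xe[of "t-1"] by simp
  have "path.phi blk b F gam lam th (x w') (hhat w') t i = path.phi blk b F gam lam th (x w) (hhat w) t i"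
    unfolding path.phi_def[OF P] path.phi_def[OF P'] path.kap_def[OF P] path.kap_def[OF P']
      path.cc_def[OF P] path.cc_def[OF P'] dd_t vv_t gg_t using xe[of t] by simp
  thus ?thesis by (simp add: w'_def)
qed

lemma RR_zero: "(\<Sum>w\<in>\<Omega>. path.RR b k F gam lam th (x w) (hhat w)) = 0"
proof -
  have "(\<Sum>w\<in>\<Omega>. path.RR b k F gam lam th (x w) (hhat w))
      = (\<Sum>w\<in>\<Omega>. \<Sum>t=1..k. real b * path.phi blk b F gam lam th (x w) (hhat w) t (w t)
           - (\<Sum>i<b. path.phi blk b F gam lam th (x w) (hhat w) t i))"
    by (rule sum.cong[OF refl]) (rule path.RR_split[OF path_inst[OF _ x0_in]])
  also have "\<dots> = (\<Sum>t=1..k. \<Sum>w\<in>\<Omega>. real b * path.phi blk b F gam lam th (x w) (hhat w) t (w t)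
           - (\<Sum>i<b. path.phi blk b F gam lam th (x w) (hhat w) t i))"
    by (rule sum.swap)
  also have "\<dots> = 0"
  proof (rule sum.neutral, rule ballI)
    fix t assume t: "t \<in> {1..k}"
    show "(\<Sum>w\<in>\<Omega>. real b * path.phi blk b F gam lam th (x w) (hhat w) t (w t)
           - (\<Sum>i<b. path.phi blk b F gam lam th (x w) (hhat w) t i)) = 0"
      by (rule zero_mean[OF t, where \<phi>="\<lambda>w i. path.phi blk b F gam lam th (x w) (hhat w) t i"])
         (use phi_inv t in auto)
  qed
  finally show ?thesis .
qed

end



context sboe_th begin

definition "Bf y = 5 * (real b + 1) * Vd x0 y + gam 1 * (real b - 1) * inner (F x0) (x0 - y)"

lemma Bf_bdd: "bdd_above (Bf ` XX)"
proof -
  obtain M where M: "\<forall>y\<in>XX. norm y \<le> M" using X_bounded by (auto simp: bounded_iff)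
  have g1: "gam 1 * (real b - 1) \<ge> 0" using gam_nonneg b_pos by simp
  show ?thesis unfolding bdd_above_def
  proof (intro exI ballI)
    fix z assume "z \<in> Bf ` XX"
    then obtain y where y: "y \<in> XX" "z = Bf y" by blast
    have ny: "norm (x0 - y) \<le> norm x0 + M" using M y(1) norm_triangle_ineq4[of x0 y] by fastforce
    have "(norm (x0 - y))\<^sup>2 \<le> (norm x0 + M)\<^sup>2" by (rule power_mono[OF ny]) simp
    hence "Vd x0 y \<le> (norm x0 + M)\<^sup>2 / 2" by (simp add: Vd_def)
    moreover have "inner (F x0) (x0 - y) \<le> norm (F x0) * (norm x0 + M)"
      using norm_cauchy_schwarz[of "F x0" "x0 - y"] ny
      by (meson mult_left_mono norm_ge_zero order_trans)
    ultimately show "z \<le> 5 * (real b + 1) * ((norm x0 + M)\<^sup>2 / 2) + gam 1 * (real b - 1) * (norm (F x0) * (norm x0 + M))"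
      unfolding y(2) Bf_def using g1
      by (intro add_mono mult_left_mono) auto
  qed
qed

lemma xbar_inner:
  assumes S: "S_w b k th gam \<noteq> 0"
  shows "S_w b k th gam * inner (F u) (xbar_w b k th gam xs - u)
    = (\<Sum>t=1..k-1. (th t * gam t * real b - th (t + 1) * gam (t + 1) * (real b - 1)) * inner (F u) (xs (t + 1) - u))
      + (th k * gam k * real b) * inner (F u) (xs (k + 1) - u)"
proof -
  define wt where "wt t = th t * gam t * real b - th (t + 1) * gam (t + 1) * (real b - 1)" for t
  define V where "V = (\<Sum>t=1..k-1. wt t *\<^sub>R xs (t + 1)) + (th k * gam k * real b) *\<^sub>R xs (k + 1)"
  have Sd: "S_w b k th gam = (\<Sum>t=1..k-1. wt t) + th k * gam k * real b" by (simp add: S_w_def wt_def)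
  have xb: "xbar_w b k th gam xs = (1 / S_w b k th gam) *\<^sub>R V" by (simp add: xbar_w_def V_def wt_def)
  have "S_w b k th gam * inner (F u) (xbar_w b k th gam xs - u) = inner (F u) V - S_w b k th gam * inner (F u) u"
    unfolding xb using S by (simp add: inner_diff_right algebra_simps)
  also have "\<dots> = (\<Sum>t=1..k-1. wt t * inner (F u) (xs (t + 1) - u)) + (th k * gam k * real b) * inner (F u) (xs (k + 1) - u)"
  proof -
    have e1: "inner (F u) V = (\<Sum>t=1..k-1. wt t * inner (F u) (xs (t + 1))) + (th k * gam k * real b) * inner (F u) (xs (k + 1))"
      unfolding V_def by (simp add: inner_sum_right inner_add_right)
    have e2: "S_w b k th gam * inner (F u) u = (\<Sum>t=1..k-1. wt t * inner (F u) u) + (th k * gam k * real b) * inner (F u) u"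
      unfolding Sd by (simp add: sum_distrib_right distrib_right)
    have e3: "(\<Sum>t=1..k-1. wt t * inner (F u) (xs (t + 1) - u)) = (\<Sum>t=1..k-1. wt t * inner (F u) (xs (t + 1))) - (\<Sum>t=1..k-1. wt t * inner (F u) u)"
      by (simp add: inner_diff_right right_diff_distrib sum_subtractf)
    show ?thesis unfolding e1 e2 e3 by (simp add: inner_diff_right right_diff_distrib)
  qed
  finally show ?thesis by (simp add: wt_def)
qed

lemma omega_bound:
  assumes w: "w \<in> \<Omega>" and S: "S_w b k th gam > 0"
  shows "gap XX F (xbar_w b k th gam (x w)) \<le> (th 1 * (SUP y\<in>XX. Bf y) + path.RR b k F gam lam th (x w) (hhat w)) / S_w b k th gam"
  unfolding gap_def
proof (rule cSUP_least)
  show "XX \<noteq> {}" using x0_in by blast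
  fix u assume u: "u \<in> XX"
  interpret P: path blk b k Xi F L Lbar gam lam th "x w" "hhat w" w u by (rule path_inst[OF w u])
  have x1: "x w 1 = x0" using x_init w by simp
  have "S_w b k th gam * inner (F u) (xbar_w b k th gam (x w) - u)
      \<le> th 1 * (gam 1 * (real b - 1) * inner (F x0) (x0 - u) + 5 * real b * Vd x0 u) + P.RR"
    using P.path_bound unfolding xbar_inner[OF less_imp_neq[OF S, symmetric]] x1 .
  also have "th 1 * (gam 1 * (real b - 1) * inner (F x0) (x0 - u) + 5 * real b * Vd x0 u) \<le> th 1 * Bf u"
  proof -
    have "5 * real b * Vd x0 u \<le> 5 * (real b + 1) * Vd x0 u" by (intro mult_right_mono) (auto simp: Vd_def)
    thus ?thesis using th1 by (intro mult_left_mono) (auto simp: Bf_def)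
  qed
  also have "th 1 * Bf u \<le> th 1 * (SUP y\<in>XX. Bf y)"
    using th1 Bf_bdd u by (intro mult_left_mono cSUP_upper) auto
  finally have "S_w b k th gam * inner (F u) (xbar_w b k th gam (x w) - u) \<le> th 1 * (SUP y\<in>XX. Bf y) + P.RR" by simp
  thus "inner (F u) (xbar_w b k th gam (x w) - u) \<le> (th 1 * (SUP y\<in>XX. Bf y) + P.RR) / S_w b k th gam"
    using S by (simp add: field_simps)
qed

lemma expect_bound:
  assumes S: "S_w b k th gam > 0"
  shows "expect_unif b k (\<lambda>w. gap XX F (xbar_w b k th gam (x w))) \<le> th 1 / S_w b k th gam * (SUP y\<in>XX. Bf y)"
proof -
  let ?S = "S_w b k th gam" and ?SB = "SUP y\<in>XX. Bf y"
  have "(\<Sum>w\<in>\<Omega>. gap XX F (xbar_w b k th gam (x w))) \<le> (\<Sum>w\<in>\<Omega>. (th 1 * ?SB + path.RR b k F gam lam th (x w) (hhat w)) / ?S)"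
    by (rule sum_mono) (rule omega_bound[OF _ S])
  also have "\<dots> = (real (card \<Omega>) * (th 1 * ?SB) + (\<Sum>w\<in>\<Omega>. path.RR b k F gam lam th (x w) (hhat w))) / ?S"
    by (simp add: sum_divide_distrib[symmetric] sum.distrib)
  also have "\<dots> = real b ^ k * (th 1 * ?SB) / ?S" by (simp add: RR_zero card_idx)
  finally have "(\<Sum>w\<in>\<Omega>. gap XX F (xbar_w b k th gam (x w))) / real b ^ k \<le> real b ^ k * (th 1 * ?SB) / ?S / real b ^ k"
    by (intro divide_right_mono) auto
  also have "\<dots> = th 1 / ?S * ?SB" using b_pos by simp
  finally show ?thesis by (simp add: expect_unif_def)
qed

end




lemma th1_pos:
  fixes th gam :: "nat \<Rightarrow> real"
  assumes k: "k \<ge> 1" and nn: "\<forall>t. th t \<ge> 0" and dec: "\<forall>t\<in>{1..k}. th t \<le> th (t - 1)"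
    and S: "S_w b k th gam > 0"
  shows "th 1 > 0"
proof (rule ccontr)
  assume "\<not> th 1 > 0"
  hence z1: "th 1 = 0" using nn by (metis less_eq_real_def)
  have z: "th t = 0" if "t \<in> {1..k}" for t
    using that
  proof (induction t)
    case 0 then show ?case by simp
  next
    case (Suc t)
    show ?case
    proof (cases "t = 0")
      case True then show ?thesis using z1 by simp
    next
      case False
      hence "th t = 0" using Suc by auto
      moreover have "th (Suc t) \<le> th t" using dec Suc.prems by (metis diff_Suc_1)
      ultimately show ?thesis using nn by (metis antisym)
    qed
  qed
  have "\<forall>t\<in>{1..k-1}. th t * gam t * real b - th (t + 1) * gam (t + 1) * (real b - 1) = 0"
    using z by auto
  hence "S_w b k th gam = 0"
    unfolding S_w_def using z k by simp
  thus False using S by simp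
qed

lemma Lip_from_block:
  fixes blk :: "'n::finite \<Rightarrow> nat"
  assumes blk: "\<forall>j. blk j < b" and Lb: "Lbar > 0"
    and Fi_lip: "\<forall>i<b. \<forall>y1\<in>X. \<forall>y2\<in>X.
                  norm (blk_part blk i (F y1) - blk_part blk i (F y2)) \<le> Lbar * norm (y1 - y2)"
  shows "\<forall>y1\<in>X. \<forall>y2\<in>X. norm (F y1 - F y2) \<le> (sqrt (real b) * Lbar) * norm (y1 - y2)"
proof (intro ballI)
  fix y1 y2 assume y: "y1 \<in> X" "y2 \<in> X"
  have "(norm (F y1 - F y2))\<^sup>2 = (\<Sum>i<b. (norm (blk_part blk i (F y1 - F y2)))\<^sup>2)"
    by (rule bp_norm_sum[OF blk, symmetric])
  also have "\<dots> \<le> (\<Sum>i<b. (Lbar * norm (y1 - y2))\<^sup>2)"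
  proof (rule sum_mono)
    fix i assume "i \<in> {..<b}"
    hence "norm (blk_part blk i (F y1 - F y2)) \<le> Lbar * norm (y1 - y2)" using Fi_lip y by (simp add: bp_diff)
    thus "(norm (blk_part blk i (F y1 - F y2)))\<^sup>2 \<le> (Lbar * norm (y1 - y2))\<^sup>2" by (rule power_mono) simp
  qed
  also have "\<dots> = (sqrt (real b) * Lbar * norm (y1 - y2))\<^sup>2"
    by (simp add: power_mult_distrib)
  finally show "norm (F y1 - F y2) \<le> sqrt (real b) * Lbar * norm (y1 - y2)"
    by (rule power2_le_imp_le) (use Lb in simp)
qed

theorem theorem4p2:
  fixes blk :: "'n::finite \<Rightarrow> nat" and b k :: nat
    and Xi :: "nat \<Rightarrow> (real^'n) set"
    and F :: "real^'n \<Rightarrow> real^'n" and L Lbar :: real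
    and gam lam :: "nat \<Rightarrow> real" and x0 :: "real^'n"
    and x :: "(nat \<Rightarrow> nat) \<Rightarrow> nat \<Rightarrow> real^'n"
  assumes b_pos: "b \<ge> 1"
    and blk_range: "\<forall>j. blk j < b"
    and blk_nonempty: "\<forall>i<b. \<exists>j. blk j = i"
    and Xi_sub: "\<forall>i<b. Xi i \<subseteq> blk_space blk i"
    and Xi_ne: "\<forall>i<b. Xi i \<noteq> {}"
    and Xi_closed: "\<forall>i<b. closed (Xi i)"
    and Xi_convex: "\<forall>i<b. convex (Xi i)"
    and X_bounded: "bounded (prod_set blk b Xi)"
    and F_lip: "\<forall>y1\<in>prod_set blk b Xi. \<forall>y2\<in>prod_set blk b Xi.
                  norm (F y1 - F y2) \<le> L * norm (y1 - y2)"
    and Fi_lip: "\<forall>i<b. \<forall>y1\<in>prod_set blk b Xi. \<forall>y2\<in>prod_set blk b Xi.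
                  norm (blk_part blk i (F y1) - blk_part blk i (F y2)) \<le> Lbar * norm (y1 - y2)"
    and F_mono: "\<forall>y1\<in>prod_set blk b Xi. \<forall>y2\<in>prod_set blk b Xi.
                  inner (F y1 - F y2) (y1 - y2) \<ge> 0"
    and gam_nonneg: "\<forall>t. gam t \<ge> 0"
    and lam_nonneg: "\<forall>t. lam t \<ge> 0"
    and k_pos: "k \<ge> 1"
    and x0_in: "x0 \<in> prod_set blk b Xi"
    and x_init: "\<forall>\<omega>\<in>idx_seqs b k. x \<omega> 0 = x0 \<and> x \<omega> 1 = x0"
    and x_step: "\<forall>\<omega>\<in>idx_seqs b k. \<forall>t\<in>{1..k}.
                  sboe_step blk Xi F (gam t) (lam t) (\<omega> t) (x \<omega> (t - 1)) (x \<omega> t) (x \<omega> (t + 1))"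
  shows
   "(\<forall>th :: nat \<Rightarrow> real.
       (\<forall>t. th t \<ge> 0) \<and>
       (\<forall>t\<in>{1..k}. th (t + 1) * gam (t + 1) * lam (t + 1) = th t * gam t * real b) \<and>
       (\<forall>t\<in>{1..k}. th (t - 1) * gam (t - 1) * real b \<ge> th t * gam t * (real b - 1)) \<and>
       (\<forall>t\<in>{1..k}. th (t - 1) \<ge> 16 * Lbar\<^sup>2 * (gam t)\<^sup>2 * (lam t)\<^sup>2 * th t) \<and>
       (\<forall>t\<in>{1..k}. th t \<le> th (t - 1)) \<and>
       4 * L\<^sup>2 * (gam k)\<^sup>2 \<le> 1 \<and>
       S_w b k th gam > 0
     \<longrightarrow>
       expect_unif b k (\<lambda>\<omega>. gap (prod_set blk b Xi) F (xbar_w b k th gam (x \<omega>)))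
         \<le> th 1 / S_w b k th gam * (SUP y\<in>prod_set blk b Xi.
               5 * (real b + 1) * Vd x0 y + gam 1 * (real b - 1) * inner (F x0) (x0 - y)))
    \<and>
    ((Lbar > 0 \<and> (\<forall>t. gam t = 1 / (4 * Lbar * real b)) \<and> (\<forall>t. lam t = real b))
     \<longrightarrow>
       expect_unif b k (\<lambda>\<omega>. gap (prod_set blk b Xi) F (xbar_w b k (\<lambda>_. 1) gam (x \<omega>)))
       \<le> 4 * Lbar * real b / (real k - 1 + real b) * (SUP y\<in>prod_set blk b Xi.
             5 * (real b + 1) * Vd x0 y
             + (real b - 1) / (4 * Lbar * real b) * inner (F x0) (x0 - y)))"
proof (intro conjI impI allI)
  fix th :: "nat \<Rightarrow> real"
  assume H: "(\<forall>t. th t \<ge> 0) \<and>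
       (\<forall>t\<in>{1..k}. th (t + 1) * gam (t + 1) * lam (t + 1) = th t * gam t * real b) \<and>
       (\<forall>t\<in>{1..k}. th (t - 1) * gam (t - 1) * real b \<ge> th t * gam t * (real b - 1)) \<and>
       (\<forall>t\<in>{1..k}. th (t - 1) \<ge> 16 * Lbar\<^sup>2 * (gam t)\<^sup>2 * (lam t)\<^sup>2 * th t) \<and>
       (\<forall>t\<in>{1..k}. th t \<le> th (t - 1)) \<and>
       4 * L\<^sup>2 * (gam k)\<^sup>2 \<le> 1 \<and>
       S_w b k th gam > 0"
  have t1: "th 1 > 0" using th1_pos[OF k_pos] H by blast
  interpret sboe_th blk b k Xi F L Lbar gam lam x0 x th
    using assms H t1 by (unfold_locales) auto
  show "expect_unif b k (\<lambda>\<omega>. gap (prod_set blk b Xi) F (xbar_w b k th gam (x \<omega>)))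
         \<le> th 1 / S_w b k th gam * (SUP y\<in>prod_set blk b Xi.
               5 * (real b + 1) * Vd x0 y + gam 1 * (real b - 1) * inner (F x0) (x0 - y))"
    using expect_bound H unfolding Bf_def by blast
next
  assume H: "Lbar > 0 \<and> (\<forall>t. gam t = 1 / (4 * Lbar * real b)) \<and> (\<forall>t. lam t = real b)"
  hence Lb: "Lbar > 0" and g: "\<And>t. gam t = 1 / (4 * Lbar * real b)" and l: "\<And>t. lam t = real b" by auto
  define L' where "L' = sqrt (real b) * Lbar"
  have bpos: "real b > 0" using b_pos by simp
  have Flip': "\<forall>y1\<in>prod_set blk b Xi. \<forall>y2\<in>prod_set blk b Xi. norm (F y1 - F y2) \<le> L' * norm (y1 - y2)"
    unfolding L'_def by (rule Lip_from_block[OF blk_range Lb Fi_lip])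
  have S: "S_w b k (\<lambda>_. 1) gam = (real k - 1 + real b) / (4 * Lbar * real b)"
  proof -
    have "S_w b k (\<lambda>_. 1) gam = (\<Sum>t=1..k-1. 1 / (4 * Lbar * real b)) + real b / (4 * Lbar * real b)"
      unfolding S_w_def g by (simp add: algebra_simps diff_divide_distrib)
    also have "\<dots> = (real k - 1 + real b) / (4 * Lbar * real b)"
      using k_pos by (simp add: of_nat_diff add_divide_distrib)
    finally show ?thesis .
  qed
  have Spos: "S_w b k (\<lambda>_. 1) gam > 0" unfolding S using Lb bpos k_pos by (simp add: field_simps)
  interpret sboe_th blk b k Xi F L' Lbar gam lam x0 x "\<lambda>_. 1"
  proof (unfold_locales)
    show "4 * L'\<^sup>2 * (gam k)\<^sup>2 \<le> 1"
    proof -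
      have bb: "real b * 1 \<le> real b * (4 * real b)" using bpos b_pos by (intro mult_left_mono) auto
      show ?thesis unfolding L'_def g using Lb bpos bb by (simp add: power_mult_distrib power_divide field_simps power2_eq_square)
    qed
    show "\<forall>t\<in>{1..k}. 16 * Lbar\<^sup>2 * (gam t)\<^sup>2 * (lam t)\<^sup>2 * 1 \<le> 1"
      unfolding g l using Lb bpos by (simp add: power_mult_distrib power_divide field_simps)
    show "\<forall>t\<in>{1..k}. 1 * gam (t - 1) * real b \<ge> 1 * gam t * (real b - 1)"
      unfolding g using Lb bpos by (simp add: field_simps)
  qed (use assms Flip' g l in auto)
  have "expect_unif b k (\<lambda>\<omega>. gap (prod_set blk b Xi) F (xbar_w b k (\<lambda>_. 1) gam (x \<omega>)))
         \<le> 1 / S_w b k (\<lambda>_. 1) gam * (SUP y\<in>prod_set blk b Xi. Bf y)"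
    using expect_bound[OF Spos] by simp
  also have "1 / S_w b k (\<lambda>_. 1) gam = 4 * Lbar * real b / (real k - 1 + real b)"
    unfolding S by simp
  also have "(SUP y\<in>prod_set blk b Xi. Bf y) = (SUP y\<in>prod_set blk b Xi.
             5 * (real b + 1) * Vd x0 y
             + (real b - 1) / (4 * Lbar * real b) * inner (F x0) (x0 - y))"
    unfolding Bf_def g by simp
  finally show "expect_unif b k (\<lambda>\<omega>. gap (prod_set blk b Xi) F (xbar_w b k (\<lambda>_. 1) gam (x \<omega>)))
       \<le> 4 * Lbar * real b / (real k - 1 + real b) * (SUP y\<in>prod_set blk b Xi.
             5 * (real b + 1) * Vd x0 y
             + (real b - 1) / (4 * Lbar * real b) * inner (F x0) (x0 - y))" .
qed


end
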